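(* Consider the model $Y_i=f(x_i)+V^{1/2}(x_i)\xi_i$, $i=0,\dots,n$, with $x_i=i/n$, where $\xi_0,\dots,\xi_n$ are i.i.d. with $E\xi_i=0$, $E\xi_i^2=1$, $E\xi_i^4<\infty$. Suppose $f\in\mathcal{H}_\alpha(M)$ and $V\in\mathcal{H}_\beta(M)$ with $V\ge 0$, where $\alpha>0$ and $0<\beta<\frac12$. Let $0<h<1$ and let $K$ be a kernel as described in the context. Assume that $$\left|1-\int_{-2/n}^{2/n}\frac1hK\!\left(\frac uh\right)du\right|\ge c$$ for some universal constant $c>0$. Define $R_i=Y_{i+1}-Y_i$ for $i=0,\dots,n-1$, for $t\in\mathbb{Z}$ $$K_n^h(t)=\frac{\int_{|t|/n}^{(|t|+1)/n}\frac1hK(\frac uh)\,du}{1-\int_{-2/n}^{2/n}\frac1hK(\frac uh)\,du}\,\mathbb{1}_{\{|t|\ge2\}},$$ and the statistic $$\hat T=\frac1n\sum_{\substack{0\le i,j\le n-1\\|i-j|\ge2}}K_n^h(i-j)R_i^2R_j^2-\frac1{n^2}\sum_{\substack{0\le i,j\le n-1\\|i-j|\ge2}}R_i^2R_j^2 .$$ With $W_i=V(\frac in)+V(\frac{i+1}n)$, $\delta_i=f(\frac{i+1}n)-f(\frac in)$ ($0\le i\le n-1$), $\bar W_n=\frac1n\sum_{i=0}^{n-1}W_i$, $\overline{\delta^2_n}=\frac1n\sum_{i=0}^{n-1}\delta_i^2$, $T=\frac1n\sum_{i=0}^{n-1}(W_i+\delta_i^2-\bar W_n-\overline{\delta^2_n})^2$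 and $W=(W_0,\dots,W_{n-1})\in\mathbb{R}^n$, we have $$E_{f,V}\big(|\hat T-T|^2\big)\lesssim n^{-8(\alpha\wedge1)}+h^{4\beta}+h^2+\frac1{n^2h}+\frac{\|W-\bar W_n\mathbf 1_n\|_2^2}{n^2},$$ where $\mathbf 1_n\in\mathbb{R}^n$ is the all-ones vector and the implicit constant does not depend on $n,h,f,V$.
   Context: $\mathcal{H}_\alpha(M)$: functions $g:[0,1]\to\mathbb{R}$ with $|g^{(\lfloor\alpha\rfloor)}(x)-g^{(\lfloor\alpha\rfloor)}(y)|\le M|x-y|^{\alpha-\lfloor\alpha\rfloor}$ for all $x,y\in[0,1]$ and $\|g^{(k)}\|_\infty\le M$ for $k=0,\dots,\lfloor\alpha\rfloor$; $M$ is a fixed sufficiently large constant. The kernel $K:\mathbb{R}\to\mathbb{R}$ is supported on $[-1,1]$, symmetric about $0$, bounded above and below by a universal constant, and satisfies $\int_{-1}^1K(x)\,dx=1$. $E_{f,V}$ denotes expectation under the model with mean $f$ and variance $V$. $a\lesssim b$ means $a\le Cb$ with $C$ not depending on $n,h,f,V$ (it may depend on $\alpha,\beta,M,K,c$ and the noise distribution). $\|\cdot\|_2$ on $\mathbb{R}^n$ is the Euclidean norm. *)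

theory Defs
  imports "HOL-Probability.Probability"
begin

definition holder_class :: "real \<Rightarrow> real \<Rightarrow> (real \<Rightarrow> real) set" where
  "holder_class \<alpha> M = {g. \<exists>D :: nat \<Rightarrow> real \<Rightarrow> real.
      (\<forall>x\<in>{0..1}. D 0 x = g x) \<and>
      (\<forall>k < nat \<lfloor>\<alpha>\<rfloor>. \<forall>x\<in>{0..1}.
          (D k has_real_derivative D (Suc k) x) (at x within {0..1})) \<and>
      (\<forall>k \<le> nat \<lfloor>\<alpha>\<rfloor>. \<forall>x\<in>{0..1}. \<bar>D k x\<bar> \<le> M) \<and>
      (\<forall>x\<in>{0..1}. \<forall>y\<in>{0..1}.
          \<bar>D (nat \<lfloor>\<alpha>\<rfloor>) x - D (nat \<lfloor>\<alpha>\<rfloor>) y\<bar> \<le> M * \<bar>x - y\<bar> powr (\<alpha> - of_int \<lfloor>\<alpha>\<rfloor>))}"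

definition is_kernel :: "(real \<Rightarrow> real) \<Rightarrow> bool" where
  "is_kernel K \<longleftrightarrow> K \<in> borel_measurable borel \<and>
     (\<forall>x. \<bar>x\<bar> > 1 \<longrightarrow> K x = 0) \<and> (\<forall>x. K (- x) = K x) \<and>
     (\<exists>B. \<forall>x. \<bar>K x\<bar> \<le> B) \<and>
     K integrable_on {-1..1} \<and> integral {-1..1} K = 1"

definition kden :: "(real \<Rightarrow> real) \<Rightarrow> nat \<Rightarrow> real \<Rightarrow> real" where
  "kden K n h = 1 - integral {-2 / real n .. 2 / real n} (\<lambda>u. K (u / h) / h)"

definition Knh :: "(real \<Rightarrow> real) \<Rightarrow> nat \<Rightarrow> real \<Rightarrow> int \<Rightarrow> real" where
  "Knh K n h t = (if \<bar>t\<bar> \<ge> 2 then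
      integral {real_of_int \<bar>t\<bar> / real n .. (real_of_int \<bar>t\<bar> + 1) / real n} (\<lambda>u. K (u / h) / h)
        / kden K n h
    else 0)"

definition obsY :: "nat \<Rightarrow> (real \<Rightarrow> real) \<Rightarrow> (real \<Rightarrow> real) \<Rightarrow> (nat \<Rightarrow> 'a \<Rightarrow> real) \<Rightarrow> nat \<Rightarrow> 'a \<Rightarrow> real" where
  "obsY n f V \<xi> i \<omega> = f (real i / real n) + sqrt (V (real i / real n)) * \<xi> i \<omega>"

definition diffR :: "nat \<Rightarrow> (real \<Rightarrow> real) \<Rightarrow> (real \<Rightarrow> real) \<Rightarrow> (nat \<Rightarrow> 'a \<Rightarrow> real) \<Rightarrow> nat \<Rightarrow> 'a \<Rightarrow> real" where
  "diffR n f V \<xi> i \<omega> = obsY n f V \<xi> (Suc i) \<omega> - obsY n f V \<xi> i \<omega>"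

definition That :: "(real \<Rightarrow> real) \<Rightarrow> nat \<Rightarrow> real \<Rightarrow> (real \<Rightarrow> real) \<Rightarrow> (real \<Rightarrow> real) \<Rightarrow> (nat \<Rightarrow> 'a \<Rightarrow> real) \<Rightarrow> 'a \<Rightarrow> real" where
  "That K n h f V \<xi> \<omega> =
     (1 / real n) * (\<Sum>i<n. \<Sum>j<n. if \<bar>int i - int j\<bar> \<ge> 2 then
         Knh K n h (int i - int j) * (diffR n f V \<xi> i \<omega>)\<^sup>2 * (diffR n f V \<xi> j \<omega>)\<^sup>2 else 0)
   - (1 / (real n)\<^sup>2) * (\<Sum>i<n. \<Sum>j<n. if \<bar>int i - int j\<bar> \<ge> 2 then
         (diffR n f V \<xi> i \<omega>)\<^sup>2 * (diffR n f V \<xi> j \<omega>)\<^sup>2 else 0)"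

definition Wv :: "nat \<Rightarrow> (real \<Rightarrow> real) \<Rightarrow> nat \<Rightarrow> real" where
  "Wv n V i = V (real i / real n) + V (real (Suc i) / real n)"

definition deltav :: "nat \<Rightarrow> (real \<Rightarrow> real) \<Rightarrow> nat \<Rightarrow> real" where
  "deltav n f i = f (real (Suc i) / real n) - f (real i / real n)"

definition Wbar :: "nat \<Rightarrow> (real \<Rightarrow> real) \<Rightarrow> real" where
  "Wbar n V = (1 / real n) * (\<Sum>i<n. Wv n V i)"

definition delta2bar :: "nat \<Rightarrow> (real \<Rightarrow> real) \<Rightarrow> real" where
  "delta2bar n f = (1 / real n) * (\<Sum>i<n. (deltav n f i)\<^sup>2)"

definition Ttarget :: "nat \<Rightarrow> (real \<Rightarrow> real) \<Rightarrow> (real \<Rightarrow> real) \<Rightarrow> real" where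
  "Ttarget n f V = (1 / real n) *
     (\<Sum>i<n. (Wv n V i + (deltav n f i)\<^sup>2 - Wbar n V - delta2bar n f)\<^sup>2)"

definition Wdev2 :: "nat \<Rightarrow> (real \<Rightarrow> real) \<Rightarrow> real" where
  "Wdev2 n V = (\<Sum>i<n. (Wv n V i - Wbar n V)\<^sup>2)"

end

theory Submission
  imports Defs "HOL-Probability.Probability"
begin


lemma kern_props:
  assumes "is_kernel K"
  obtains B where "B > 0" "\<And>x. \<bar>K x\<bar> \<le> B" "K \<in> borel_measurable borel"
    "\<And>x. \<bar>x\<bar> > 1 \<Longrightarrow> K x = 0" "\<And>x. K (-x) = K x" "integral {-1..1} K = 1"
    "K integrable_on {-1..1}"
proof -
  from assms obtain B where B: "\<forall>x. \<bar>K x\<bar> \<le> B" unfolding is_kernel_def by auto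
  have "B \<ge> 0" using B[rule_format, of 0] by auto
  have B1: "\<bar>K x\<bar> \<le> B + 1" for x using B[rule_format, of x] by linarith
  show ?thesis apply (rule that[of "B+1"]) using assms B1 \<open>B \<ge> 0\<close> unfolding is_kernel_def by auto
qed

lemma kh_integrable:
  assumes "is_kernel K" "h > 0"
  shows "(\<lambda>u. K (u / h) / h) integrable_on {a..b}"
proof -
  obtain B where B: "B > 0" "\<And>x. \<bar>K x\<bar> \<le> B" "K \<in> borel_measurable borel"
    using kern_props[OF assms(1)] by metis
  have m: "(\<lambda>u. K (u / h) / h) \<in> borel_measurable borel" using B(3) by measurable
  have m2: "(\<lambda>u. K (u / h) / h) \<in> borel_measurable (lebesgue_on {a..b})"
    using m by (metis measurable_lborel2 measurable_restrict_space1 measurable_completion)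
  show ?thesis
    apply (rule absolutely_integrable_on_def[THEN iffD1, THEN conjunct1])
    apply (rule measurable_bounded_by_integrable_imp_absolutely_integrable[where g="\<lambda>_. B / h"])
    using m2 B assms by (auto simp: abs_div divide_right_mono)
qed

lemma kh_int_bound:
  assumes "is_kernel K" "h > 0" "a \<le> b" "\<And>x. \<bar>K x\<bar> \<le> B"
  shows "\<bar>integral {a..b} (\<lambda>u. K (u / h) / h)\<bar> \<le> B / h * (b - a)"
proof -
  have "norm (integral {a..b} (\<lambda>u. K (u / h) / h)) \<le> integral {a..b} (\<lambda>_. B / h)"
    apply (rule integral_norm_bound_integral)
    using kh_integrable[OF assms(1,2)] assms by (auto simp: abs_div divide_right_mono)
  then show ?thesis using assms(3) by (simp add: mult.commute)
qed

lemma kh_zero: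
  assumes "is_kernel K" "h > 0" "\<bar>u\<bar> > h"
  shows "K (u / h) / h = 0"
proof -
  have "\<bar>u / h\<bar> > 1" using assms by (simp add: abs_div)
  then show ?thesis using assms(1) unfolding is_kernel_def by auto
qed

lemma kh_int_zero:
  assumes "is_kernel K" "h > 0" "h \<le> a"
  shows "integral {a..b} (\<lambda>u. K (u / h) / h) = 0"
proof -
  have "integral {a..b} (\<lambda>u. K (u / h) / h) = integral {a..b} (\<lambda>u. 0)"
    apply (rule integral_spike[where S="{h}"])
    using kh_zero[OF assms(1,2)] assms by auto
  then show ?thesis by simp
qed

definition KPhi :: "(real \<Rightarrow> real) \<Rightarrow> real \<Rightarrow> real \<Rightarrow> real" where
  "KPhi K h x = integral {0..x} (\<lambda>u. K (u / h) / h)"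

lemma Phi_diff:
  assumes "is_kernel K" "h > 0" "0 \<le> a" "a \<le> b"
  shows "integral {a..b} (\<lambda>u. K (u / h) / h) = KPhi K h b - KPhi K h a"
  using Henstock_Kurzweil_Integration.integral_combine[of 0 a b "\<lambda>u. K (u / h) / h"] kh_integrable[OF assms(1,2)] assms
  unfolding KPhi_def by auto

lemma Phi_h:
  assumes "is_kernel K" "h > 0"
  shows "KPhi K h h = 1/2"
proof -
  obtain B where B: "\<And>x. K (-x) = K x" "integral {-1..1} K = 1" "K integrable_on {-1..1}"
    using kern_props[OF assms(1)] by metis
  have i1: "integral {-1..0} K + integral {0..1} K = 1"
    using Henstock_Kurzweil_Integration.integral_combine[of "-1" 0 1 K] B by auto
  have "integral {-1..-0} (\<lambda>x. K (-x)) = integral {0..1} K"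
    by (rule Henstock_Kurzweil_Integration.integral_reflect_real)
  then have "integral {-1..0} K = integral {0..1} K" using B(1) by simp
  with i1 have half: "integral {0..1} K = 1/2" by simp
  have img: "(\<lambda>x. x / (1/h)) ` {0..1} = {0..h}"
    using assms(2) by (auto simp: image_iff intro!: bexI[where x="_ / h"])
  have "integral ((\<lambda>x. x / (1/h)) ` {0..1}) (\<lambda>x. K ((1/h) * x)) = (1 / \<bar>1/h\<bar>) *\<^sub>R integral {0..1} K"
    by (rule integral_stretch_real) (use assms in auto)
  then have "integral {0..h} (\<lambda>x. K (x / h)) = h * (1/2)"
    using img half assms(2) by simp
  then show ?thesis unfolding KPhi_def using assms(2) by (simp add: integral_divide)
qed

lemma Phi_ge:
  assumes "is_kernel K" "h > 0" "h \<le> x"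
  shows "KPhi K h x = 1/2"
  using Phi_diff[OF assms(1,2), of h x] kh_int_zero[OF assms(1,2), of h x] Phi_h[OF assms(1,2)] assms
  by auto

lemma kden_Phi:
  assumes "is_kernel K" "h > 0" "n \<ge> 1"
  shows "kden K n h = 1 - 2 * KPhi K h (2 / real n)"
proof -
  let ?f = "\<lambda>u. K (u / h) / h"
  have sym: "\<And>x. K (-x) = K x" using kern_props[OF assms(1)] by metis
  have a: "2 / real n \<ge> 0" by simp
  have c: "integral {-(2/real n)..0} ?f + integral {0..2/real n} ?f = integral {-(2/real n)..2/real n} ?f"
    using Henstock_Kurzweil_Integration.integral_combine[of "-(2/real n)" 0 "2/real n" ?f] kh_integrable[OF assms(1,2)] a by auto
  have "integral {-(2/real n)..-0} (\<lambda>x. ?f (-x)) = integral {0..2/real n} ?f"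
    by (rule Henstock_Kurzweil_Integration.integral_reflect_real)
  then have e: "integral {-(2/real n)..0} ?f = integral {0..2/real n} ?f" using sym
    by (simp add: minus_divide_left[symmetric] del: minus_divide_left)
  have m: "- 2 / real n = -(2/real n)" by simp
  have "integral {-(2/real n)..2/real n} ?f = 2 * integral {0..2/real n} ?f" using c e by linarith
  then show ?thesis unfolding kden_def KPhi_def m by linarith
qed

lemma h_large:
  assumes "is_kernel K" "h > 0" "n \<ge> 1" "c > 0" "\<bar>kden K n h\<bar> \<ge> c"
  shows "h > 2 / real n"
proof (rule ccontr)
  assume "\<not> h > 2 / real n"
  then have "KPhi K h (2 / real n) = 1/2" using Phi_ge[OF assms(1,2)] by auto
  then have "kden K n h = 0" using kden_Phi[OF assms(1,2,3)] by simp
  then show False using assms by simp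
qed


lemma Knh_small: "\<bar>t\<bar> < 2 \<Longrightarrow> Knh K n h t = 0"
  unfolding Knh_def by auto

lemma Knh_sym: "Knh K n h (-t) = Knh K n h t"
  unfolding Knh_def by auto

lemma Knh_bound:
  assumes "is_kernel K" "h > 0" "n \<ge> 1" "c > 0" "\<bar>kden K n h\<bar> \<ge> c" "\<And>x. \<bar>K x\<bar> \<le> B"
  shows "\<bar>Knh K n h t\<bar> \<le> B / (c * real n * h)"
proof (cases "2 \<le> \<bar>t\<bar>")
  case True
  have B0: "B \<ge> 0" using assms(6)[of 0] by auto
  have "\<bar>integral {real_of_int \<bar>t\<bar> / real n .. (real_of_int \<bar>t\<bar> + 1) / real n} (\<lambda>u. K (u / h) / h)\<bar>
      \<le> B / h * ((real_of_int \<bar>t\<bar> + 1) / real n - real_of_int \<bar>t\<bar> / real n)"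
    apply (rule kh_int_bound[OF assms(1,2)])
    using assms by (auto simp: divide_right_mono)
  also have "\<dots> = B / (real n * h)" using assms by (simp add: field_simps)
  finally have i: "\<bar>integral {real_of_int \<bar>t\<bar> / real n .. (real_of_int \<bar>t\<bar> + 1) / real n} (\<lambda>u. K (u / h) / h)\<bar>
      \<le> B / (real n * h)" .
  have "\<bar>Knh K n h t\<bar> = \<bar>integral {real_of_int \<bar>t\<bar> / real n .. (real_of_int \<bar>t\<bar> + 1) / real n} (\<lambda>u. K (u / h) / h)\<bar> / \<bar>kden K n h\<bar>"
    unfolding Knh_def if_P[OF True] by (rule abs_divide)
  also have "\<dots> \<le> (B / (real n * h)) / c"
    apply (rule frac_le) using i assms B0 by auto
  finally show ?thesis by (simp add: field_simps)
next
  case False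
  have "B \<ge> 0" using assms(6)[of 0] by auto
  then show ?thesis using False assms unfolding Knh_def by auto
qed

lemma Knh_supp:
  assumes "is_kernel K" "h > 0" "n \<ge> 1" "real_of_int \<bar>t\<bar> > real n * h"
  shows "Knh K n h t = 0"
proof -
  have "h \<le> real_of_int \<bar>t\<bar> / real n" using assms by (simp add: field_simps)
  then show ?thesis unfolding Knh_def using kh_int_zero[OF assms(1,2)] by auto
qed

lemma Knh_pos_val:
  assumes "is_kernel K" "h > 0" "n \<ge> 1" "2 \<le> t"
  shows "Knh K n h (int t) = (KPhi K h (real (Suc t) / real n) - KPhi K h (real t / real n)) / kden K n h"
proof -
  have "Knh K n h (int t) = integral {real t / real n .. (real t + 1) / real n} (\<lambda>u. K (u / h) / h) / kden K n h"
    unfolding Knh_def using assms by auto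
  also have "\<dots> = (KPhi K h (real (Suc t) / real n) - KPhi K h (real t / real n)) / kden K n h"
    using Phi_diff[OF assms(1,2), of "real t / real n" "(real t + 1) / real n"] by (simp add: divide_right_mono add.commute)
  finally show ?thesis .
qed

lemma Knh_half:
  assumes "is_kernel K" "h > 0" "n \<ge> 1" "c > 0" "\<bar>kden K n h\<bar> \<ge> c"
    and N: "N = nat \<lfloor>real n * h\<rfloor>"
  shows "(\<Sum>t=2..N. Knh K n h (int t)) = 1/2"
proof -
  have hl: "h > 2 / real n" using h_large[OF assms(1-5)] .
  then have "real n * h > 2" using assms(3) by (simp add: field_simps)
  then have N2: "N \<ge> 2" using N by linarith
  have "(\<Sum>t=2..N. Knh K n h (int t)) = (\<Sum>t=2..N. (KPhi K h (real (Suc t) / real n) - KPhi K h (real t / real n)) / kden K n h)"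
    by (rule sum.cong) (use Knh_pos_val[OF assms(1-3)] in auto)
  also have "\<dots> = (\<Sum>t=2..N. (KPhi K h (real (Suc t) / real n) - KPhi K h (real t / real n))) / kden K n h"
    by (simp add: sum_divide_distrib)
  also have "(\<Sum>t=2..N. (KPhi K h (real (Suc t) / real n) - KPhi K h (real t / real n))) =
      KPhi K h (real (Suc N) / real n) - KPhi K h (real 2 / real n)"
    using sum_Suc_diff[of 2 N "\<lambda>t. KPhi K h (real t / real n)"] N2 by simp
  also have "KPhi K h (real (Suc N) / real n) = 1/2"
  proof (rule Phi_ge[OF assms(1,2)])
    have "real (Suc N) > real n * h" using N by linarith
    then show "h \<le> real (Suc N) / real n" using assms(3) by (simp add: field_simps)
  qed
  finally have S: "(\<Sum>t=2..N. Knh K n h (int t)) = (1/2 - KPhi K h (real 2 / real n)) / kden K n h" .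
  have kd: "1/2 - KPhi K h (real 2 / real n) = kden K n h / 2" using kden_Phi[OF assms(1-3)] by simp
  have nz: "kden K n h \<noteq> 0" using assms(4,5) by auto
  show ?thesis unfolding S kd using nz by simp
qed

lemma sum_split_center:
  fixes F :: "int \<Rightarrow> real"
  assumes "i < n"
  shows "(\<Sum>j<n. F (int i - int j)) = (\<Sum>t=1..i. F (int t)) + F 0 + (\<Sum>t=1..<n-i. F (- int t))"
proof -
  have U: "{..<n} = {..<i} \<union> {i} \<union> {i<..<n}" using assms by auto
  have "(\<Sum>j<n. F (int i - int j)) = (\<Sum>j<i. F (int i - int j)) + F 0 + (\<Sum>j\<in>{i<..<n}. F (int i - int j))"
    unfolding U by (subst sum.union_disjoint, auto)+
  also have "(\<Sum>j<i. F (int i - int j)) = (\<Sum>t=1..i. F (int t))"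
    by (rule sum.reindex_bij_witness[of _ "\<lambda>t. i - t" "\<lambda>j. i - j"]) auto
  also have "(\<Sum>j\<in>{i<..<n}. F (int i - int j)) = (\<Sum>t=1..<n-i. F (- int t))"
    by (rule sum.reindex_bij_witness[of _ "\<lambda>t. i + t" "\<lambda>j. j - i"]) auto
  finally show ?thesis .
qed

lemma Knh_interior:
  assumes "is_kernel K" "h > 0" "n \<ge> 1" "c > 0" "\<bar>kden K n h\<bar> \<ge> c"
    and N: "N = nat \<lfloor>real n * h\<rfloor>" and i: "N \<le> i" "i + N < n"
  shows "(\<Sum>j<n. Knh K n h (int i - int j)) = 1"
proof -
  have z: "Knh K n h (int t) = 0" if "t > N" for t
    apply (rule Knh_supp[OF assms(1-3)]) using that N by linarith
  have z2: "Knh K n h (- int t) = 0" if "t > N" for t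
    using z[OF that] Knh_sym by metis
  have s1: "(\<Sum>t=1..i. Knh K n h (int t)) = (\<Sum>t=1..N. Knh K n h (int t))"
    by (rule sum.mono_neutral_right) (use i z in auto)
  have s2: "(\<Sum>t=1..<n-i. Knh K n h (- int t)) = (\<Sum>t=1..N. Knh K n h (int t))"
  proof -
    have "(\<Sum>t=1..<n-i. Knh K n h (- int t)) = (\<Sum>t=1..N. Knh K n h (- int t))"
      by (rule sum.mono_neutral_right) (use i z2 in auto)
    then show ?thesis using Knh_sym by simp
  qed
  have s3: "(\<Sum>t=1..N. Knh K n h (int t)) = (\<Sum>t=2..N. Knh K n h (int t))"
  proof -
    have hl: "h > 2 / real n" using h_large[OF assms(1-5)] .
    then have "real n * h > 2" using assms(3) by (simp add: field_simps)
    then have N2: "N \<ge> 2" using N by linarith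
    have "{1..N} = insert 1 {2..N}" using N2 by auto
    then show ?thesis using Knh_small[of 1] by simp
  qed
  show ?thesis
    using sum_split_center[of i n "Knh K n h"] i s1 s2 s3 Knh_half[OF assms(1-6)] Knh_small[of 0]
    by simp
qed


lemma holder_small:
  assumes "g \<in> holder_class a M" "0 < a" "a < 1"
  shows "\<forall>x\<in>{0..1}. \<bar>g x\<bar> \<le> M"
    and "\<forall>x\<in>{0..1}. \<forall>y\<in>{0..1}. \<bar>g x - g y\<bar> \<le> M * \<bar>x - y\<bar> powr a"
proof -
  have fl: "\<lfloor>a\<rfloor> = 0" using assms by linarith
  obtain D where D: "\<forall>x\<in>{0..1}. D 0 x = g x"
      "\<forall>k \<le> nat \<lfloor>a\<rfloor>. \<forall>x\<in>{0..1}. \<bar>D k x\<bar> \<le> M"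
      "\<forall>x\<in>{0..1}. \<forall>y\<in>{0..1}.
          \<bar>D (nat \<lfloor>a\<rfloor>) x - D (nat \<lfloor>a\<rfloor>) y\<bar> \<le> M * \<bar>x - y\<bar> powr (a - of_int \<lfloor>a\<rfloor>)"
    using assms(1) unfolding holder_class_def by blast
  show "\<forall>x\<in>{0..1}. \<bar>g x\<bar> \<le> M" using D(1,2) fl by fastforce
  show "\<forall>x\<in>{0..1}. \<forall>y\<in>{0..1}. \<bar>g x - g y\<bar> \<le> M * \<bar>x - y\<bar> powr a"
    using D(1,3) fl by fastforce
qed

lemma holder_lip:
  assumes "g \<in> holder_class a M" "1 \<le> a"
  shows "\<forall>x\<in>{0..1}. \<bar>g x\<bar> \<le> M"
    and "\<forall>x\<in>{0..1}. \<forall>y\<in>{0..1}. \<bar>g x - g y\<bar> \<le> M * \<bar>x - y\<bar>"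
proof -
  have fl: "nat \<lfloor>a\<rfloor> \<ge> 1" using assms by linarith
  obtain D where D: "\<forall>x\<in>{0..1}. D 0 x = g x"
      "\<forall>k < nat \<lfloor>a\<rfloor>. \<forall>x\<in>{0..1}. (D k has_real_derivative D (Suc k) x) (at x within {0..1})"
      "\<forall>k \<le> nat \<lfloor>a\<rfloor>. \<forall>x\<in>{0..1}. \<bar>D k x\<bar> \<le> M"
    using assms(1) unfolding holder_class_def by blast
  show "\<forall>x\<in>{0..1}. \<bar>g x\<bar> \<le> M" using D(1,3) fl by fastforce
  have der: "\<And>z. z \<in> {0..1::real} \<Longrightarrow> (D 0 has_field_derivative D 1 z) (at z within {0..1})"
    using D(2) fl by fastforce
  have bd: "\<And>z. z \<in> {0..1::real} \<Longrightarrow> norm (D 1 z) \<le> M"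
    using D(3) fl by fastforce
  show "\<forall>x\<in>{0..1}. \<forall>y\<in>{0..1}. \<bar>g x - g y\<bar> \<le> M * \<bar>x - y\<bar>"
  proof (intro ballI)
    fix x y :: real assume xy: "x \<in> {0..1}" "y \<in> {0..1}"
    have "norm (D 0 x - D 0 y) \<le> M * norm (x - y)"
      by (rule field_differentiable_bound[OF convex_real_interval(5) der bd xy])
    then show "\<bar>g x - g y\<bar> \<le> M * \<bar>x - y\<bar>" using D(1) xy by simp
  qed
qed

lemma holder_f:
  assumes "g \<in> holder_class a M" "0 < a" "M > 0"
  shows "\<forall>x\<in>{0..1}. \<forall>y\<in>{0..1}. \<bar>g x - g y\<bar> \<le> M * \<bar>x - y\<bar> powr (min a 1)"
proof (cases "a < 1")
  case True
  then show ?thesis using holder_small(2)[OF assms(1,2) True] by simp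
next
  case False
  then have "min a 1 = 1" by simp
  then show ?thesis using holder_lip(2)[OF assms(1)] False by simp
qed


lemma sq_mono: assumes "\<bar>x\<bar> \<le> (y::real)" shows "x\<^sup>2 \<le> y\<^sup>2"
proof -
  have "\<bar>x\<bar>\<^sup>2 \<le> y\<^sup>2" by (rule power_mono[OF assms]) simp
  then show ?thesis by simp
qed

locale detc =
  fixes n :: nat and h M \<beta> Dn \<kappa> :: real and N :: nat and Kt :: "int \<Rightarrow> real" and W d :: "nat \<Rightarrow> real"
  assumes n1: "n \<ge> 1" and h0: "0 < h" and h1: "h < 1" and hn: "real n * h > 2"
    and \<beta>0: "0 < \<beta>" and M0: "M > 0" and \<kappa>0: "\<kappa> \<ge> 0"
    and NH: "real N \<le> real n * h"
    and Ksym: "\<And>t. Kt (-t) = Kt t" and Ksmall: "\<And>t. \<bar>t\<bar> < 2 \<Longrightarrow> Kt t = 0"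
    and Ksupp: "\<And>t. \<bar>t\<bar> > int N \<Longrightarrow> Kt t = 0"
    and Kbd: "\<And>t. \<bar>Kt t\<bar> \<le> \<kappa> / (real n * h)"
    and Kint: "\<And>i. N \<le> i \<Longrightarrow> i + N < n \<Longrightarrow> (\<Sum>j<n. Kt (int i - int j)) = 1"
    and W0: "\<And>i. 0 \<le> W i" and W1: "\<And>i. W i \<le> 2 * M"
    and WH: "\<And>i j. i < n \<Longrightarrow> j < n \<Longrightarrow> \<bar>W i - W j\<bar> \<le> 2 * M * (\<bar>real i - real j\<bar> / real n) powr \<beta>"
    and d0: "\<And>i. 0 \<le> d i" and d1: "\<And>i. d i \<le> Dn"
begin

definition "m i = W i + d i"
definition "Mm = 2 * M + Dn"
definition "mb = (1 / real n) * (\<Sum>i<n. m i)"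
definition "kap i = (\<Sum>j<n. Kt (int i - int j))"
definition "X1 i = (\<Sum>j<n. Kt (int i - int j) * (m j - m i))"
definition "X2 i = m i * (kap i - 1)"
definition "X4 i = (1 / real n) * (\<Sum>j<n. if \<bar>int i - int j\<bar> < 2 then m j else 0)"
definition "g i j = (if 2 \<le> \<bar>int i - int j\<bar> then Kt (int i - int j) / real n - 1 / (real n)\<^sup>2 else 0)"
definition "cc i = (\<Sum>j<n. 2 * g i j * m j)"
definition "Tt = (1 / real n) * (\<Sum>i<n. (m i - mb)\<^sup>2)"
definition "Dd = (\<Sum>i<n. \<Sum>j<n. g i j * m i * m j)"
definition "Wb = (1 / real n) * (\<Sum>i<n. W i)"
definition "Wdev = (\<Sum>i<n. (W i - Wb)\<^sup>2)"

lemma Dn0: "Dn \<ge> 0" using d0[of 0] d1[of 0] by linarith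
lemma m0: "0 \<le> m i" unfolding m_def using W0[of i] d0[of i] by simp
lemma m1: "m i \<le> Mm" unfolding m_def Mm_def using W1[of i] d1[of i] by simp
lemma Mm0: "Mm \<ge> 0" using m0[of 0] m1[of 0] by linarith
lemma nh1: "real n * h \<ge> 1" using hn by simp
lemma npos: "real n > 0" using n1 by simp

lemma g_sym: "g i j = g j i"
  unfolding g_def using Ksym[of "int i - int j"] by (auto simp: abs_minus_commute)

lemma Kt_loc:
  assumes "Kt (int i - int j) \<noteq> 0"
  shows "\<bar>real i - real j\<bar> \<le> real n * h"
proof -
  have "\<bar>int i - int j\<bar> \<le> int N" using Ksupp assms by force
  then have "\<bar>real i - real j\<bar> \<le> real N" by linarith
  then show ?thesis using NH by linarith
qed

lemma Kt_rowsum: "(\<Sum>j<n. \<bar>Kt (int i - int j)\<bar>) \<le> 3 * \<kappa>"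
proof -
  define J where "J = {j. j < n \<and> \<bar>int i - int j\<bar> \<le> int N}"
  have J1: "J \<subseteq> {i - N..i + N}" unfolding J_def by auto
  have cJ: "real (card J) \<le> 2 * real N + 1"
  proof -
    have "card J \<le> card {i - N..i + N}" using J1 by (intro card_mono) auto
    also have "\<dots> \<le> 2 * N + 1" by simp
    finally show ?thesis by linarith
  qed
  have "(\<Sum>j<n. \<bar>Kt (int i - int j)\<bar>) = (\<Sum>j\<in>J. \<bar>Kt (int i - int j)\<bar>)"
    apply (rule sum.mono_neutral_right)
    using Ksupp unfolding J_def by force+
  also have "\<dots> \<le> (\<Sum>j\<in>J. \<kappa> / (real n * h))"
    by (rule sum_mono) (rule Kbd)
  also have "\<dots> = real (card J) * (\<kappa> / (real n * h))" by simp
  also have "\<dots> \<le> (2 * (real n * h) + 1) * (\<kappa> / (real n * h))"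
    apply (rule mult_right_mono) using cJ NH \<kappa>0 h0 npos by auto
  also have "\<dots> = 2 * \<kappa> + \<kappa> / (real n * h)" using h0 npos by (simp add: field_simps)
  also have "\<dots> \<le> 3 * \<kappa>"
  proof -
    have "\<kappa> / (real n * h) \<le> \<kappa> / 1" apply (rule divide_left_mono) using nh1 \<kappa>0 by auto
    then show ?thesis by simp
  qed
  finally show ?thesis .
qed

lemma mdiff_loc:
  assumes "i < n" "j < n" "Kt (int i - int j) \<noteq> 0"
  shows "\<bar>m j - m i\<bar> \<le> 2 * M * h powr \<beta> + Dn"
proof -
  have a: "\<bar>real i - real j\<bar> / real n \<le> h" using Kt_loc[OF assms(3)] npos by (simp add: field_simps)
  have "\<bar>W j - W i\<bar> \<le> 2 * M * (\<bar>real j - real i\<bar> / real n) powr \<beta>" using WH assms by blast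
  also have "\<dots> \<le> 2 * M * h powr \<beta>"
    apply (rule mult_left_mono) apply (rule powr_mono2) using a \<beta>0 M0 by (auto simp: abs_minus_commute)
  finally have "\<bar>W j - W i\<bar> \<le> 2 * M * h powr \<beta>" .
  moreover have "\<bar>d j - d i\<bar> \<le> Dn" using d0[of i] d1[of i] d0[of j] d1[of j] by linarith
  ultimately show ?thesis unfolding m_def by linarith
qed

definition "Lb = 2 * M * h powr \<beta> + Dn"

lemma Lb0: "Lb \<ge> 0" unfolding Lb_def using M0 Dn0 by simp

lemma X1_sq_sum: "i < n \<Longrightarrow> (\<Sum>j<n. \<bar>Kt (int i - int j)\<bar> * (m j - m i)\<^sup>2) \<le> 3 * \<kappa> * Lb\<^sup>2"
proof -
  assume i: "i < n"
  have "(\<Sum>j<n. \<bar>Kt (int i - int j)\<bar> * (m j - m i)\<^sup>2) \<le> (\<Sum>j<n. \<bar>Kt (int i - int j)\<bar> * Lb\<^sup>2)"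
  proof (rule sum_mono)
    fix j assume j: "j \<in> {..<n}"
    show "\<bar>Kt (int i - int j)\<bar> * (m j - m i)\<^sup>2 \<le> \<bar>Kt (int i - int j)\<bar> * Lb\<^sup>2"
    proof (cases "Kt (int i - int j) = 0")
      case False
      have "\<bar>m j - m i\<bar> \<le> Lb" using mdiff_loc[OF i _ False] j unfolding Lb_def by auto
      then have "(m j - m i)\<^sup>2 \<le> Lb\<^sup>2" by (rule sq_mono)
      then show ?thesis by (rule mult_left_mono) simp
    qed simp
  qed
  also have "\<dots> = (\<Sum>j<n. \<bar>Kt (int i - int j)\<bar>) * Lb\<^sup>2" by (simp add: sum_distrib_right)
  also have "\<dots> \<le> 3 * \<kappa> * Lb\<^sup>2" by (rule mult_right_mono[OF Kt_rowsum]) simp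
  finally show ?thesis .
qed

lemma X1_bound: "i < n \<Longrightarrow> \<bar>X1 i\<bar> \<le> 3 * \<kappa> * Lb"
proof -
  assume i: "i < n"
  have "\<bar>X1 i\<bar> \<le> (\<Sum>j<n. \<bar>Kt (int i - int j) * (m j - m i)\<bar>)" unfolding X1_def by (rule sum_abs)
  also have "\<dots> \<le> (\<Sum>j<n. \<bar>Kt (int i - int j)\<bar> * Lb)"
  proof (rule sum_mono)
    fix j assume j: "j \<in> {..<n}"
    show "\<bar>Kt (int i - int j) * (m j - m i)\<bar> \<le> \<bar>Kt (int i - int j)\<bar> * Lb"
    proof (cases "Kt (int i - int j) = 0")
      case False
      have "\<bar>m j - m i\<bar> \<le> Lb" using mdiff_loc[OF i _ False] j unfolding Lb_def by auto
      then show ?thesis by (simp add: abs_mult mult_left_mono)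
    qed simp
  qed
  also have "\<dots> = (\<Sum>j<n. \<bar>Kt (int i - int j)\<bar>) * Lb" by (simp add: sum_distrib_right)
  also have "\<dots> \<le> 3 * \<kappa> * Lb" by (rule mult_right_mono[OF Kt_rowsum Lb0])
  finally show ?thesis .
qed

lemma kap_bound: "\<bar>kap i - 1\<bar> \<le> 3 * \<kappa> + 1"
proof -
  have "\<bar>kap i\<bar> \<le> (\<Sum>j<n. \<bar>Kt (int i - int j)\<bar>)" unfolding kap_def by (rule sum_abs)
  then show ?thesis using Kt_rowsum[of i] by linarith
qed

lemma X2_bound: "\<bar>X2 i\<bar> \<le> Mm * (3 * \<kappa> + 1)"
  unfolding X2_def abs_mult using m0[of i] m1[of i] kap_bound[of i]
  by (intro mult_mono) auto

lemma X2_int: "N \<le> i \<Longrightarrow> i + N < n \<Longrightarrow> X2 i = 0"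
  unfolding X2_def kap_def using Kint by simp

lemma X4_bound: "0 \<le> X4 i \<and> X4 i \<le> 3 * Mm / real n"
proof -
  have "(\<Sum>j<n. if \<bar>int i - int j\<bar> < 2 then m j else 0) = (\<Sum>j\<in>{j. j < n \<and> \<bar>int i - int j\<bar> < 2}. m j)"
    by (rule sum.mono_neutral_cong_right) auto
  also have "\<dots> \<le> (\<Sum>j\<in>{j. j < n \<and> \<bar>int i - int j\<bar> < 2}. Mm)" by (rule sum_mono) (rule m1)
  also have "\<dots> = real (card {j. j < n \<and> \<bar>int i - int j\<bar> < 2}) * Mm" by simp
  also have "\<dots> \<le> 3 * Mm"
  proof -
    have "{j. j < n \<and> \<bar>int i - int j\<bar> < 2} \<subseteq> {i - 1..i+1}" by auto
    then have "card {j. j < n \<and> \<bar>int i - int j\<bar> < 2} \<le> card {i - 1..i+1}" by (intro card_mono) auto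
    also have "\<dots> \<le> 3" by simp
    finally show ?thesis using Mm0 by (intro mult_right_mono) auto
  qed
  finally have up: "(\<Sum>j<n. if \<bar>int i - int j\<bar> < 2 then m j else 0) \<le> 3 * Mm" .
  have lo: "0 \<le> (\<Sum>j<n. if \<bar>int i - int j\<bar> < 2 then m j else 0)" by (rule sum_nonneg) (simp add: m0)
  show ?thesis unfolding X4_def using up lo npos by (auto simp: divide_right_mono)
qed

end

context detc begin

definition "Bd = {i. i < n \<and> \<not> (N \<le> i \<and> i + N < n)}"

lemma Bd_card: "real (card Bd) \<le> 2 * real n * h"
proof -
  have "Bd \<subseteq> {..<N} \<union> {n - N..<n}" unfolding Bd_def by auto
  then have "card Bd \<le> card ({..<N} \<union> {n - N..<n})" by (intro card_mono) auto
  also have "\<dots> \<le> card {..<N} + card {n - N..<n}" by (rule card_Un_le)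
  also have "\<dots> \<le> 2 * N" by simp
  finally show ?thesis using NH by simp
qed

lemma sum_Bd:
  assumes "\<And>i. i < n \<Longrightarrow> i \<notin> Bd \<Longrightarrow> F i = 0" "\<And>i. i \<in> Bd \<Longrightarrow> F i \<le> C" "\<And>i. 0 \<le> F i" "C \<ge> 0"
  shows "(\<Sum>i<n. F i) \<le> 2 * real n * h * C"
proof -
  have C0: "C \<ge> 0" using assms(4) .
  have "(\<Sum>i<n. F i) = (\<Sum>i\<in>Bd. F i)"
    by (rule sum.mono_neutral_right) (use assms(1) in \<open>auto simp: Bd_def\<close>)
  also have "\<dots> \<le> (\<Sum>i\<in>Bd. C)" by (rule sum_mono) (rule assms(2))
  also have "\<dots> = real (card Bd) * C" by simp
  also have "\<dots> \<le> 2 * real n * h * C"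
  proof (cases "Bd = {}")
    case True then show ?thesis using h0 npos C0 by simp
  next
    case False then show ?thesis using Bd_card C0 by (intro mult_right_mono) auto
  qed
  finally show ?thesis .
qed

lemma X2_sq_sum: "(\<Sum>i<n. (X2 i)\<^sup>2) \<le> 2 * real n * h * (Mm * (3 * \<kappa> + 1))\<^sup>2"
proof (rule sum_Bd)
  fix i show "(X2 i)\<^sup>2 \<le> (Mm * (3 * \<kappa> + 1))\<^sup>2"
    using X2_bound[of i] by (rule sq_mono)
qed (use Mm0 \<kappa>0 in \<open>auto simp: Bd_def X2_int\<close>)

lemma mX2_sum: "(\<Sum>i<n. \<bar>m i * X2 i\<bar>) \<le> 2 * real n * h * (Mm * (Mm * (3 * \<kappa> + 1)))"
proof (rule sum_Bd)
  fix i show "\<bar>m i * X2 i\<bar> \<le> Mm * (Mm * (3 * \<kappa> + 1))"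
    unfolding abs_mult using X2_bound[of i] m0[of i] m1[of i] by (intro mult_mono) auto
qed (use Mm0 \<kappa>0 in \<open>auto simp: Bd_def X2_int\<close>)

lemma g_row:
  "(\<Sum>j<n. g i j * y j) = (1 / real n) * (\<Sum>j<n. Kt (int i - int j) * y j) - (1 / (real n)\<^sup>2) * (\<Sum>j<n. y j)
     + (1 / (real n)\<^sup>2) * (\<Sum>j<n. if \<bar>int i - int j\<bar> < 2 then y j else 0)"
proof -
  have "\<And>j. g i j * y j = (1 / real n) * (Kt (int i - int j) * y j) - (1 / (real n)\<^sup>2) * y j
     + (1 / (real n)\<^sup>2) * (if \<bar>int i - int j\<bar> < 2 then y j else 0)"
    unfolding g_def using Ksmall by (auto simp: field_simps)
  then show ?thesis by (simp add: sum.distrib sum_subtractf sum_distrib_left)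
qed

lemma Kt_m: "(\<Sum>j<n. Kt (int i - int j) * m j) = X1 i + X2 i + m i"
proof -
  have "X1 i = (\<Sum>j<n. Kt (int i - int j) * m j) - m i * kap i"
    unfolding X1_def kap_def by (simp add: algebra_simps sum_subtractf sum_distrib_left)
  then show ?thesis unfolding X2_def by (simp add: algebra_simps)
qed

lemma row_m: "(\<Sum>j<n. g i j * m j) = (1 / real n) * (X1 i + X2 i + (m i - mb) + X4 i)"
  unfolding g_row Kt_m mb_def X4_def using npos by (simp add: field_simps power2_eq_square)

lemma cc_decomp: "cc i = (2 / real n) * (X1 i + X2 i + (m i - mb) + X4 i)"
proof -
  have "cc i = 2 * (\<Sum>j<n. g i j * m j)" unfolding cc_def by (simp add: sum_distrib_left mult.assoc)
  then show ?thesis unfolding row_m by simp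
qed

lemma mb_sum: "(\<Sum>i<n. m i) = real n * mb" unfolding mb_def using npos by simp

lemma Tt_alt: "Tt = (1 / real n) * (\<Sum>i<n. (m i)\<^sup>2) - mb\<^sup>2"
proof -
  have "(\<Sum>i<n. (m i - mb)\<^sup>2) = (\<Sum>i<n. (m i)\<^sup>2) - 2 * mb * (\<Sum>i<n. m i) + real n * mb\<^sup>2"
    by (simp add: power2_diff sum.distrib sum_subtractf sum_distrib_left algebra_simps)
  then show ?thesis unfolding Tt_def mb_sum using npos by (simp add: field_simps power2_eq_square)
qed

lemma Dd_Tt: "Dd - Tt = (1 / real n) * ((\<Sum>i<n. m i * X1 i) + (\<Sum>i<n. m i * X2 i) + (\<Sum>i<n. m i * X4 i))"
proof -
  have "Dd = (\<Sum>i<n. m i * (\<Sum>j<n. g i j * m j))"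
    unfolding Dd_def by (simp add: sum_distrib_left algebra_simps)
  also have "\<dots> = (1 / real n) * ((\<Sum>i<n. m i * X1 i) + (\<Sum>i<n. m i * X2 i) + (\<Sum>i<n. (m i)\<^sup>2)
      - mb * (\<Sum>i<n. m i) + (\<Sum>i<n. m i * X4 i))"
    unfolding row_m by (simp add: sum_distrib_left sum.distrib sum_subtractf algebra_simps power2_eq_square)
  finally show ?thesis unfolding Tt_alt mb_sum using npos by (simp add: field_simps power2_eq_square)
qed

lemma mX1_sym: "(\<Sum>i<n. m i * X1 i) = - (1/2) * (\<Sum>i<n. \<Sum>j<n. Kt (int i - int j) * (m j - m i)\<^sup>2)"
proof -
  define A where "A = (\<Sum>i<n. \<Sum>j<n. Kt (int i - int j) * (m i * (m j - m i)))"
  have A1: "(\<Sum>i<n. m i * X1 i) = A" unfolding A_def X1_def by (simp add: sum_distrib_left algebra_simps)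
  have "A = (\<Sum>j<n. \<Sum>i<n. Kt (int i - int j) * (m i * (m j - m i)))" unfolding A_def by (rule sum.swap)
  also have "\<dots> = (\<Sum>j<n. \<Sum>i<n. Kt (int j - int i) * (m i * (m j - m i)))"
  proof -
    have ks: "Kt (int i - int j) = Kt (int j - int i)" for i j :: nat
      using Ksym[of "int j - int i"] by simp
    show ?thesis by (intro sum.cong refl) (rule arg_cong[where f="\<lambda>x. x * _"], rule ks)
  qed
  finally have A2: "A = (\<Sum>i<n. \<Sum>j<n. Kt (int i - int j) * (m j * (m i - m j)))" by simp
  have "2 * A = (\<Sum>i<n. \<Sum>j<n. Kt (int i - int j) * (m i * (m j - m i)) + Kt (int i - int j) * (m j * (m i - m j)))"
    using A2 unfolding A_def by (simp add: sum.distrib)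
  also have "\<dots> = (\<Sum>i<n. \<Sum>j<n. - (Kt (int i - int j) * (m j - m i)\<^sup>2))"
    by (simp add: algebra_simps power2_eq_square)
  finally show ?thesis using A1 by (simp add: sum_negf)
qed

lemma mX1_bound: "\<bar>\<Sum>i<n. m i * X1 i\<bar> \<le> (3/2) * real n * \<kappa> * Lb\<^sup>2"
proof -
  have "\<bar>\<Sum>i<n. \<Sum>j<n. Kt (int i - int j) * (m j - m i)\<^sup>2\<bar> \<le> (\<Sum>i<n. \<bar>\<Sum>j<n. Kt (int i - int j) * (m j - m i)\<^sup>2\<bar>)"
    by (rule sum_abs)
  also have "\<dots> \<le> (\<Sum>i<n. 3 * \<kappa> * Lb\<^sup>2)"
  proof (rule sum_mono)
    fix i assume i: "i \<in> {..<n}"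
    have "\<bar>\<Sum>j<n. Kt (int i - int j) * (m j - m i)\<^sup>2\<bar> \<le> (\<Sum>j<n. \<bar>Kt (int i - int j) * (m j - m i)\<^sup>2\<bar>)"
      by (rule sum_abs)
    also have "\<dots> = (\<Sum>j<n. \<bar>Kt (int i - int j)\<bar> * (m j - m i)\<^sup>2)" by (simp add: abs_mult)
    also have "\<dots> \<le> 3 * \<kappa> * Lb\<^sup>2" using X1_sq_sum i by auto
    finally show "\<bar>\<Sum>j<n. Kt (int i - int j) * (m j - m i)\<^sup>2\<bar> \<le> 3 * \<kappa> * Lb\<^sup>2" .
  qed
  also have "\<dots> = real n * (3 * \<kappa> * Lb\<^sup>2)" by simp
  finally show ?thesis unfolding mX1_sym by (simp add: abs_mult)
qed

lemma mX4_bound: "\<bar>\<Sum>i<n. m i * X4 i\<bar> \<le> 3 * Mm\<^sup>2"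
proof -
  have "\<bar>\<Sum>i<n. m i * X4 i\<bar> \<le> (\<Sum>i<n. \<bar>m i * X4 i\<bar>)" by (rule sum_abs)
  also have "\<dots> \<le> (\<Sum>i<n. Mm * (3 * Mm / real n))"
    apply (rule sum_mono) unfolding abs_mult using m0 m1 X4_bound Mm0 by (intro mult_mono) auto
  also have "\<dots> = 3 * Mm\<^sup>2" using npos by (simp add: power2_eq_square)
  finally show ?thesis .
qed

lemma DdTt_bound: "(Dd - Tt)\<^sup>2 \<le> 3 * ((2 * \<kappa> * Lb\<^sup>2)\<^sup>2 + (2 * h * (Mm * (Mm * (3 * \<kappa> + 1))))\<^sup>2 + (3 * Mm\<^sup>2)\<^sup>2 / (real n)\<^sup>2)"
proof -
  define a b c where "a = (\<Sum>i<n. m i * X1 i)" and "b = (\<Sum>i<n. m i * X2 i)" and "c = (\<Sum>i<n. m i * X4 i)"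
  have "0 \<le> real n * \<kappa> * Lb\<^sup>2" using \<kappa>0 by simp
  then have ha: "\<bar>a\<bar> \<le> real n * (2 * \<kappa> * Lb\<^sup>2)" unfolding a_def using mX1_bound by linarith
  have "\<bar>b\<bar> \<le> 2 * real n * h * (Mm * (Mm * (3 * \<kappa> + 1)))"
    unfolding b_def by (rule order_trans[OF sum_abs mX2_sum])
  then have hb: "\<bar>b\<bar> \<le> real n * (2 * h * (Mm * (Mm * (3 * \<kappa> + 1))))" by (simp add: mult_ac)
  have hc: "\<bar>c\<bar> \<le> 3 * Mm\<^sup>2" unfolding c_def by (rule mX4_bound)
  have sq: "(a + b + c)\<^sup>2 \<le> 3 * (a\<^sup>2 + b\<^sup>2 + c\<^sup>2)"
  proof -
    have e: "3 * (a\<^sup>2 + b\<^sup>2 + c\<^sup>2) - (a + b + c)\<^sup>2 = (a-b)\<^sup>2 + (a-c)\<^sup>2 + (b-c)\<^sup>2"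
      by (simp add: power2_eq_square algebra_simps)
    have "0 \<le> (a-b)\<^sup>2 + (a-c)\<^sup>2 + (b-c)\<^sup>2" by simp
    then show ?thesis using e by linarith
  qed
  have "(Dd - Tt)\<^sup>2 = (a + b + c)\<^sup>2 / (real n)\<^sup>2" unfolding Dd_Tt a_def b_def c_def by (simp add: power_divide)
  also have "\<dots> \<le> 3 * (a\<^sup>2 + b\<^sup>2 + c\<^sup>2) / (real n)\<^sup>2" using sq by (simp add: divide_right_mono)
  also have "\<dots> = 3 * (a\<^sup>2 / (real n)\<^sup>2 + b\<^sup>2 / (real n)\<^sup>2 + c\<^sup>2 / (real n)\<^sup>2)" by (simp add: add_divide_distrib)
  also have "\<dots> \<le> 3 * ((2 * \<kappa> * Lb\<^sup>2)\<^sup>2 + (2 * h * (Mm * (Mm * (3 * \<kappa> + 1))))\<^sup>2 + (3 * Mm\<^sup>2)\<^sup>2 / (real n)\<^sup>2)"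
  proof -
    have dv: "\<And>x Z. x \<le> (real n)\<^sup>2 * Z \<Longrightarrow> x / (real n)\<^sup>2 \<le> Z"
      using npos by (simp add: divide_le_eq mult.commute)
    have "a\<^sup>2 \<le> (real n * (2 * \<kappa> * Lb\<^sup>2))\<^sup>2" using ha by (rule sq_mono)
    then have 1: "a\<^sup>2 / (real n)\<^sup>2 \<le> (2 * \<kappa> * Lb\<^sup>2)\<^sup>2" unfolding power_mult_distrib[of "real n"] by (rule dv)
    have "b\<^sup>2 \<le> (real n * (2 * h * (Mm * (Mm * (3 * \<kappa> + 1)))))\<^sup>2" using hb by (rule sq_mono)
    then have 2: "b\<^sup>2 / (real n)\<^sup>2 \<le> (2 * h * (Mm * (Mm * (3 * \<kappa> + 1))))\<^sup>2" unfolding power_mult_distrib[of "real n"] by (rule dv)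
    have "c\<^sup>2 \<le> (3 * Mm\<^sup>2)\<^sup>2" using hc by (rule sq_mono)
    then have 3: "c\<^sup>2 / (real n)\<^sup>2 \<le> (3 * Mm\<^sup>2)\<^sup>2 / (real n)\<^sup>2" by (rule divide_right_mono) simp
    show ?thesis using add_mono[OF add_mono[OF 1 2] 3] by (rule mult_left_mono) simp
  qed
  finally show ?thesis .
qed

end

context detc begin

lemma sq4: "((a::real) + b + c + e)\<^sup>2 \<le> 4 * (a\<^sup>2 + b\<^sup>2 + c\<^sup>2 + e\<^sup>2)"
proof -
  have "4 * (a\<^sup>2 + b\<^sup>2 + c\<^sup>2 + e\<^sup>2) - (a + b + c + e)\<^sup>2 =
    (a-b)\<^sup>2 + (a-c)\<^sup>2 + (a-e)\<^sup>2 + (b-c)\<^sup>2 + (b-e)\<^sup>2 + (c-e)\<^sup>2"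
    by (simp add: power2_eq_square algebra_simps)
  moreover have "0 \<le> (a-b)\<^sup>2 + (a-c)\<^sup>2 + (a-e)\<^sup>2 + (b-c)\<^sup>2 + (b-e)\<^sup>2 + (c-e)\<^sup>2" by simp
  ultimately show ?thesis by linarith
qed

lemma sq2: "((a::real) + b)\<^sup>2 \<le> 2 * (a\<^sup>2 + b\<^sup>2)"
proof -
  have "2 * (a\<^sup>2 + b\<^sup>2) - (a + b)\<^sup>2 = (a-b)\<^sup>2" by (simp add: power2_eq_square algebra_simps)
  moreover have "0 \<le> (a-b)\<^sup>2" by simp
  ultimately show ?thesis by linarith
qed

definition "db = (1 / real n) * (\<Sum>i<n. d i)"

lemma mb_split: "mb = Wb + db"
  unfolding mb_def Wb_def db_def m_def by (simp add: sum.distrib algebra_simps)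

lemma db_bounds: "0 \<le> db \<and> db \<le> Dn"
proof -
  have "0 \<le> (\<Sum>i<n. d i)" by (rule sum_nonneg) (simp add: d0)
  moreover have "(\<Sum>i<n. d i) \<le> (\<Sum>i<n. Dn)" by (rule sum_mono) (simp add: d1)
  ultimately show ?thesis unfolding db_def using npos by (auto simp: field_simps)
qed

lemma msq: "(\<Sum>i<n. (m i - mb)\<^sup>2) \<le> 2 * Wdev + 2 * real n * Dn\<^sup>2"
proof -
  have "(\<Sum>i<n. (m i - mb)\<^sup>2) \<le> (\<Sum>i<n. 2 * (W i - Wb)\<^sup>2 + 2 * Dn\<^sup>2)"
  proof (rule sum_mono)
    fix i
    have e: "m i - mb = (W i - Wb) + (d i - db)" unfolding mb_split m_def by simp
    have "\<bar>d i - db\<bar> \<le> Dn" using db_bounds d0[of i] d1[of i] by linarith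
    then have "(d i - db)\<^sup>2 \<le> Dn\<^sup>2" by (rule sq_mono)
    then have "2 * ((W i - Wb)\<^sup>2 + (d i - db)\<^sup>2) \<le> 2 * (W i - Wb)\<^sup>2 + 2 * Dn\<^sup>2" by simp
    then show "(m i - mb)\<^sup>2 \<le> 2 * (W i - Wb)\<^sup>2 + 2 * Dn\<^sup>2" unfolding e using sq2[of "W i - Wb" "d i - db"] by (rule order_trans[rotated])
  qed
  also have "\<dots> = 2 * Wdev + 2 * real n * Dn\<^sup>2" unfolding Wdev_def by (simp add: sum.distrib sum_distrib_left)
  finally show ?thesis .
qed

lemma cc_sq_sum: "(\<Sum>i<n. (cc i)\<^sup>2) \<le> (16 / (real n)\<^sup>2) *
   (real n * (3 * \<kappa> * Lb)\<^sup>2 + 2 * real n * h * (Mm * (3 * \<kappa> + 1))\<^sup>2 + (2 * Wdev + 2 * real n * Dn\<^sup>2) + real n * (3 * Mm / real n)\<^sup>2)"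
proof -
  have "(\<Sum>i<n. (cc i)\<^sup>2) \<le> (\<Sum>i<n. (16 / (real n)\<^sup>2) * ((X1 i)\<^sup>2 + (X2 i)\<^sup>2 + (m i - mb)\<^sup>2 + (X4 i)\<^sup>2))"
  proof (rule sum_mono)
    fix i
    have "(cc i)\<^sup>2 = (4 / (real n)\<^sup>2) * (X1 i + X2 i + (m i - mb) + X4 i)\<^sup>2"
    proof -
      have q: "(2 / real n)\<^sup>2 = 4 / (real n)\<^sup>2" by (simp add: power_divide)
      show ?thesis by (simp only: cc_decomp power_mult_distrib q)
    qed
    also have "\<dots> \<le> (4 / (real n)\<^sup>2) * (4 * ((X1 i)\<^sup>2 + (X2 i)\<^sup>2 + (m i - mb)\<^sup>2 + (X4 i)\<^sup>2))"
      by (rule mult_left_mono[OF sq4]) simp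
    finally show "(cc i)\<^sup>2 \<le> (16 / (real n)\<^sup>2) * ((X1 i)\<^sup>2 + (X2 i)\<^sup>2 + (m i - mb)\<^sup>2 + (X4 i)\<^sup>2)" by simp
  qed
  also have "\<dots> = (16 / (real n)\<^sup>2) * ((\<Sum>i<n. (X1 i)\<^sup>2) + (\<Sum>i<n. (X2 i)\<^sup>2) + (\<Sum>i<n. (m i - mb)\<^sup>2) + (\<Sum>i<n. (X4 i)\<^sup>2))"
    by (simp only: sum.distrib distrib_left sum_distrib_left)
  also have "\<dots> \<le> (16 / (real n)\<^sup>2) *
   (real n * (3 * \<kappa> * Lb)\<^sup>2 + 2 * real n * h * (Mm * (3 * \<kappa> + 1))\<^sup>2 + (2 * Wdev + 2 * real n * Dn\<^sup>2) + real n * (3 * Mm / real n)\<^sup>2)"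
  proof (rule mult_left_mono)
    have 1: "(\<Sum>i<n. (X1 i)\<^sup>2) \<le> (\<Sum>i<n. (3 * \<kappa> * Lb)\<^sup>2)"
      by (rule sum_mono) (rule sq_mono, rule X1_bound, simp)
    have 4: "(\<Sum>i<n. (X4 i)\<^sup>2) \<le> (\<Sum>i<n. (3 * Mm / real n)\<^sup>2)"
      by (rule sum_mono) (rule sq_mono, use X4_bound in auto)
    show "(\<Sum>i<n. (X1 i)\<^sup>2) + (\<Sum>i<n. (X2 i)\<^sup>2) + (\<Sum>i<n. (m i - mb)\<^sup>2) + (\<Sum>i<n. (X4 i)\<^sup>2)
      \<le> real n * (3 * \<kappa> * Lb)\<^sup>2 + 2 * real n * h * (Mm * (3 * \<kappa> + 1))\<^sup>2 + (2 * Wdev + 2 * real n * Dn\<^sup>2) + real n * (3 * Mm / real n)\<^sup>2"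
      using 1 4 X2_sq_sum msq by simp
  qed simp
  finally show ?thesis .
qed

lemma g_abs: "\<bar>g i j\<bar> \<le> (\<kappa> + 1) / ((real n)\<^sup>2 * h)"
proof -
  have a: "\<bar>Kt t / real n\<bar> \<le> \<kappa> / ((real n)\<^sup>2 * h)" for t
    using Kbd[of t] npos h0 by (simp add: abs_div power2_eq_square divide_right_mono field_simps)
  have b: "1 / (real n)\<^sup>2 \<le> 1 / ((real n)\<^sup>2 * h)" using h0 h1 npos by (simp add: field_simps)
  have "\<bar>Kt (int i - int j) / real n - 1 / (real n)\<^sup>2\<bar> \<le> \<kappa> / ((real n)\<^sup>2 * h) + 1 / ((real n)\<^sup>2 * h)"
    using a[of "int i - int j"] b abs_triangle_ineq4[of "Kt (int i - int j) / real n" "1 / (real n)\<^sup>2"] by simp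
  also have "\<dots> = (\<kappa> + 1) / ((real n)\<^sup>2 * h)" by (simp add: add_divide_distrib)
  finally show ?thesis unfolding g_def using \<kappa>0 h0 by auto
qed

lemma g_sum: "(\<Sum>i<n. \<Sum>j<n. \<bar>g i j\<bar>) \<le> 3 * \<kappa> + 1"
proof -
  have "(\<Sum>i<n. \<Sum>j<n. \<bar>g i j\<bar>) \<le> (\<Sum>i<n. \<Sum>j<n. \<bar>Kt (int i - int j)\<bar> / real n + 1 / (real n)\<^sup>2)"
  proof (intro sum_mono)
    fix i j
    show "\<bar>g i j\<bar> \<le> \<bar>Kt (int i - int j)\<bar> / real n + 1 / (real n)\<^sup>2"
      unfolding g_def using npos abs_triangle_ineq4[of "Kt (int i - int j) / real n" "1 / (real n)\<^sup>2"] by (auto simp: abs_div)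
  qed
  also have "\<dots> = (\<Sum>i<n. (\<Sum>j<n. \<bar>Kt (int i - int j)\<bar>) / real n + real n / (real n)\<^sup>2)"
    by (simp add: sum.distrib sum_divide_distrib)
  also have "\<dots> \<le> (\<Sum>i<n. 3 * \<kappa> / real n + real n / (real n)\<^sup>2)"
    by (intro sum_mono add_mono divide_right_mono Kt_rowsum) auto
  also have "\<dots> = 3 * \<kappa> + 1" using npos by (simp add: power2_eq_square field_simps)
  finally show ?thesis .
qed

end


lemma avg_le: "(A::real) \<le> P \<Longrightarrow> B \<le> P \<Longrightarrow> (A + B) / 2 \<le> P" by simp

lemma amgm: "(x::real) * y \<le> (x\<^sup>2 + y\<^sup>2) / 2"
proof -
  have "0 \<le> (x - y)\<^sup>2" by simp
  then show ?thesis by (simp add: power2_eq_square algebra_simps)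
qed

context detc begin

lemma powr_n_bound:
  assumes "a > 0"
  shows "real n powr (-4 * a) / real n \<le> real n powr (-8 * a) + 1 / (real n)\<^sup>2"
proof -
  have n1r: "1 \<le> real n" using n1 by simp
  have e: "real n powr (-4 * a) / real n = real n powr (-4 * a - 1)"
    using npos by (simp add: powr_diff)
  show ?thesis
  proof (cases "4 * a \<le> 1")
    case True
    then have "real n powr (-4 * a - 1) \<le> real n powr (-8 * a)" by (intro powr_mono) (use n1r in auto)
    then show ?thesis unfolding e by (simp add: add_increasing2)
  next
    case False
    then have "real n powr (-4 * a - 1) \<le> real n powr (-2)" by (intro powr_mono) (use n1r in auto)
    also have "\<dots> = 1 / (real n)\<^sup>2" using npos by (simp add: powr_minus powr_realpow divide_inverse)
    finally show ?thesis unfolding e by (smt (z3) powr_ge_zero)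
  qed
qed

definition "P0 a = real n powr (-8 * a) + h powr (4 * \<beta>) + h\<^sup>2 + 1 / ((real n)\<^sup>2 * h) + Wdev / (real n)\<^sup>2"

lemma Wdev_nonneg: "0 \<le> Wdev" unfolding Wdev_def by (simp add: sum_nonneg)

lemma P0_terms:
  shows "real n powr (-8 * a) \<le> P0 a" "h powr (4 * \<beta>) \<le> P0 a" "h\<^sup>2 \<le> P0 a"
    "1 / ((real n)\<^sup>2 * h) \<le> P0 a" "Wdev / (real n)\<^sup>2 \<le> P0 a" "1 / (real n)\<^sup>2 \<le> P0 a"
    "0 \<le> P0 a"
proof -
  have t: "0 \<le> real n powr (-8 * a)" "0 \<le> h powr (4 * \<beta>)" "0 \<le> h\<^sup>2" "0 \<le> 1 / ((real n)\<^sup>2 * h)"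
      "0 \<le> Wdev / (real n)\<^sup>2" using h0 Wdev_nonneg by auto
  then show "real n powr (-8 * a) \<le> P0 a" "h powr (4 * \<beta>) \<le> P0 a" "h\<^sup>2 \<le> P0 a"
    "1 / ((real n)\<^sup>2 * h) \<le> P0 a" "Wdev / (real n)\<^sup>2 \<le> P0 a" "0 \<le> P0 a"
    unfolding P0_def by linarith+
  have "1 / (real n)\<^sup>2 \<le> 1 / ((real n)\<^sup>2 * h)" using h0 h1 npos by (simp add: field_simps)
  then show "1 / (real n)\<^sup>2 \<le> P0 a" using t unfolding P0_def by linarith
qed

lemma hb_n: "(h powr \<beta>)\<^sup>2 / real n \<le> P0 a"
proof -
  have "(h powr \<beta>)\<^sup>2 * (1 / real n) \<le> (((h powr \<beta>)\<^sup>2)\<^sup>2 + (1 / real n)\<^sup>2) / 2" by (rule amgm)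
  also have "((h powr \<beta>)\<^sup>2)\<^sup>2 = h powr (4 * \<beta>)" using h0 by (simp add: powr_power)
  also have "(1 / real n)\<^sup>2 = 1 / (real n)\<^sup>2" by (simp add: power_divide)
  finally have "(h powr \<beta>)\<^sup>2 / real n \<le> (h powr (4 * \<beta>) + 1 / (real n)\<^sup>2) / 2" by simp
  moreover have "(h powr (4 * \<beta>) + 1 / (real n)\<^sup>2) / 2 \<le> P0 a" by (rule avg_le[OF P0_terms(2,6)])
  ultimately show ?thesis by (rule order_trans)
qed

lemma h_n: "h / real n \<le> P0 a"
proof -
  have "h * (1 / real n) \<le> (h\<^sup>2 + (1 / real n)\<^sup>2) / 2" by (rule amgm)
  then have 1: "h / real n \<le> (h\<^sup>2 + 1 / (real n)\<^sup>2) / 2" by (simp add: power_divide)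
  moreover have "(h\<^sup>2 + 1 / (real n)\<^sup>2) / 2 \<le> P0 a" by (rule avg_le[OF P0_terms(3,6)])
  ultimately show ?thesis by (rule order_trans)
qed

lemma n3: "1 / (real n) ^ 3 \<le> P0 a"
proof -
  have "1 / (real n) ^ 3 \<le> 1 / (real n)\<^sup>2" using n1 npos
    by (intro divide_left_mono) (auto simp: power_increasing)
  then show ?thesis using P0_terms(6)[of a] by linarith
qed

end


definition Cf :: "real \<Rightarrow> real \<Rightarrow> real \<Rightarrow> real" where
  "Cf M \<kappa> E2 = 3 * (36 * E2\<^sup>2 * (\<kappa> + 1) * (3 * \<kappa> + 1))
    + 9 * E2 * (16 * (9 * \<kappa>\<^sup>2 * (8 * M\<^sup>2 + 4 * M ^ 4) + 2 * ((2 * M + M\<^sup>2) * (3 * \<kappa> + 1))\<^sup>2 + 2 + 4 * M ^ 4 + 9 * (2 * M + M\<^sup>2)\<^sup>2))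
    + 3 * (3 * (4 * \<kappa>\<^sup>2 * (128 * M ^ 4 + 8 * M ^ 8) + 4 * ((2 * M + M\<^sup>2) * ((2 * M + M\<^sup>2) * (3 * \<kappa> + 1)))\<^sup>2 + 9 * ((2 * M + M\<^sup>2)\<^sup>2)\<^sup>2))"

context detc begin

lemma Dn_facts:
  assumes a0: "a > 0" and Dd: "Dn = M\<^sup>2 * real n powr (-2 * a)"
  shows "Dn \<le> M\<^sup>2" "Dn\<^sup>2 = M ^ 4 * real n powr (-4 * a)" "(Dn\<^sup>2)\<^sup>2 = M ^ 8 * real n powr (-8 * a)"
    "Dn\<^sup>2 / real n \<le> (2 * M ^ 4) * P0 a"
proof -
  have n1r: "1 \<le> real n" using n1 by simp
  have "real n powr (-2 * a) \<le> real n powr 0" by (rule powr_mono) (use a0 n1r in auto)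
  then show "Dn \<le> M\<^sup>2" unfolding Dd using npos by (simp add: mult_left_le)
  show D2: "Dn\<^sup>2 = M ^ 4 * real n powr (-4 * a)" unfolding Dd using npos
    by (simp add: power_mult_distrib powr_power)
  show "(Dn\<^sup>2)\<^sup>2 = M ^ 8 * real n powr (-8 * a)" unfolding D2 using npos
    by (simp add: power_mult_distrib powr_power flip: power_mult)
  have "Dn\<^sup>2 / real n = M ^ 4 * (real n powr (-4 * a) / real n)" unfolding D2 by simp
  also have "\<dots> \<le> M ^ 4 * (real n powr (-8 * a) + 1 / (real n)\<^sup>2)"
    by (rule mult_left_mono[OF powr_n_bound[OF a0]]) simp
  also have "\<dots> \<le> M ^ 4 * (P0 a + P0 a)"
    by (rule mult_left_mono) (use P0_terms(1,6)[of a] in auto)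
  finally show "Dn\<^sup>2 / real n \<le> (2 * M ^ 4) * P0 a" by simp
qed

lemma Lb_facts:
  assumes a0: "a > 0" and Dd: "Dn = M\<^sup>2 * real n powr (-2 * a)"
  shows "Lb\<^sup>2 / real n \<le> (8 * M\<^sup>2 + 4 * M ^ 4) * P0 a" "(Lb\<^sup>2)\<^sup>2 \<le> (128 * M ^ 4 + 8 * M ^ 8) * P0 a"
proof -
  define X where "X = (h powr \<beta>)\<^sup>2"
  have X0: "0 \<le> X" unfolding X_def by simp
  have L2: "Lb\<^sup>2 \<le> 8 * M\<^sup>2 * X + 2 * Dn\<^sup>2"
  proof -
    have "Lb\<^sup>2 \<le> 2 * (2 * M * h powr \<beta>)\<^sup>2 + 2 * Dn\<^sup>2" unfolding Lb_def using sq2 by simp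
    then show ?thesis unfolding X_def by (simp add: power_mult_distrib)
  qed
  have "Lb\<^sup>2 / real n \<le> (8 * M\<^sup>2 * X + 2 * Dn\<^sup>2) / real n" by (rule divide_right_mono[OF L2]) simp
  also have "\<dots> = 8 * M\<^sup>2 * (X / real n) + 2 * (Dn\<^sup>2 / real n)" by (simp add: add_divide_distrib)
  also have "\<dots> \<le> 8 * M\<^sup>2 * P0 a + 2 * ((2 * M ^ 4) * P0 a)"
    apply (rule add_mono)
     apply (rule mult_left_mono) using hb_n[of a] unfolding X_def apply simp apply simp
    apply (rule mult_left_mono) using Dn_facts(4)[OF a0 Dd] by auto
  finally show "Lb\<^sup>2 / real n \<le> (8 * M\<^sup>2 + 4 * M ^ 4) * P0 a" by (simp add: algebra_simps)
  have "(Lb\<^sup>2)\<^sup>2 \<le> (8 * M\<^sup>2 * X + 2 * Dn\<^sup>2)\<^sup>2" by (rule power_mono[OF L2]) simp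
  also have "\<dots> \<le> 2 * ((8 * M\<^sup>2 * X)\<^sup>2 + (2 * Dn\<^sup>2)\<^sup>2)" by (rule sq2)
  also have "\<dots> = 128 * M ^ 4 * X\<^sup>2 + 8 * (Dn\<^sup>2)\<^sup>2" by (simp add: power_mult_distrib flip: power_mult)
  also have "X\<^sup>2 = h powr (4 * \<beta>)" unfolding X_def using h0 by (simp add: powr_power flip: power_mult)
  also have "(Dn\<^sup>2)\<^sup>2 = M ^ 8 * real n powr (-8 * a)" by (rule Dn_facts(3)[OF a0 Dd])
  also have "128 * M ^ 4 * h powr (4 * \<beta>) + 8 * (M ^ 8 * real n powr (-8 * a)) \<le> 128 * M ^ 4 * P0 a + 8 * (M ^ 8 * P0 a)"
    by (intro add_mono mult_left_mono P0_terms) auto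
  finally show "(Lb\<^sup>2)\<^sup>2 \<le> (128 * M ^ 4 + 8 * M ^ 8) * P0 a" by (simp add: algebra_simps)
qed

lemma total_bound:
  assumes a0: "a > 0" and Dd: "Dn = M\<^sup>2 * real n powr (-2 * a)" and E0: "E2 \<ge> 0"
    and Qb: "Q \<le> 36 * E2\<^sup>2 * ((\<kappa> + 1) / ((real n)\<^sup>2 * h)) * (3 * \<kappa> + 1)"
    and Sb: "S \<le> (16 / (real n)\<^sup>2) * (real n * (3 * \<kappa> * Lb)\<^sup>2 + 2 * real n * h * (Mm * (3 * \<kappa> + 1))\<^sup>2 + (2 * Wdev + 2 * real n * Dn\<^sup>2) + real n * (3 * Mm / real n)\<^sup>2)"
    and Db: "D \<le> 3 * ((2 * \<kappa> * Lb\<^sup>2)\<^sup>2 + (2 * h * (Mm * (Mm * (3 * \<kappa> + 1))))\<^sup>2 + (3 * Mm\<^sup>2)\<^sup>2 / (real n)\<^sup>2)"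
  shows "3 * Q + 3 * (3 * E2 * S) + 3 * D \<le> Cf M \<kappa> E2 * P0 a"
proof -
  define MM where "MM = 2 * M + M\<^sup>2"
  have Mm_le: "Mm \<le> MM" unfolding Mm_def MM_def using Dn_facts(1)[OF a0 Dd] by simp
  have P0n: "0 \<le> P0 a" by (rule P0_terms(7))
  have k0: "0 \<le> \<kappa>" using \<kappa>0 .
  have Z1: "(Mm * (3 * \<kappa> + 1))\<^sup>2 \<le> (MM * (3 * \<kappa> + 1))\<^sup>2"
    using Mm_le Mm0 k0 by (intro power_mono mult_right_mono) auto
  have Z2: "(Mm * (Mm * (3 * \<kappa> + 1)))\<^sup>2 \<le> (MM * (MM * (3 * \<kappa> + 1)))\<^sup>2"
    using Mm_le Mm0 k0 by (intro power_mono mult_mono mult_right_mono) auto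
  have Z3: "Mm\<^sup>2 \<le> MM\<^sup>2" using Mm_le Mm0 by (intro power_mono) auto
  have Z4: "(Mm\<^sup>2)\<^sup>2 \<le> (MM\<^sup>2)\<^sup>2" by (rule power_mono[OF Z3]) simp
  have q1: "36 * E2\<^sup>2 * ((\<kappa> + 1) / ((real n)\<^sup>2 * h)) * (3 * \<kappa> + 1) = (36 * E2\<^sup>2 * (\<kappa> + 1) * (3 * \<kappa> + 1)) * (1 / ((real n)\<^sup>2 * h))"
    by simp
  have cQ: "3 * Q \<le> (3 * (36 * E2\<^sup>2 * (\<kappa> + 1) * (3 * \<kappa> + 1))) * P0 a"
  proof -
    have c0: "0 \<le> 36 * E2\<^sup>2 * (\<kappa> + 1) * (3 * \<kappa> + 1)" using k0 by simp
    have "(36 * E2\<^sup>2 * (\<kappa> + 1) * (3 * \<kappa> + 1)) * (1 / ((real n)\<^sup>2 * h)) \<le> (36 * E2\<^sup>2 * (\<kappa> + 1) * (3 * \<kappa> + 1)) * P0 a"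
      by (rule mult_left_mono[OF P0_terms(4) c0])
    then have "Q \<le> (36 * E2\<^sup>2 * (\<kappa> + 1) * (3 * \<kappa> + 1)) * P0 a"
      using order_trans[OF Qb[unfolded q1]] by blast
    then have "3 * Q \<le> 3 * ((36 * E2\<^sup>2 * (\<kappa> + 1) * (3 * \<kappa> + 1)) * P0 a)" by linarith
    then show ?thesis by (simp only: mult.assoc)
  qed
  have s1: "(16 / (real n)\<^sup>2) * (real n * (3 * \<kappa> * Lb)\<^sup>2) = (144 * \<kappa>\<^sup>2) * (Lb\<^sup>2 / real n)"
    using npos by (simp add: field_simps power2_eq_square)
  have s2: "(16 / (real n)\<^sup>2) * (2 * real n * h * (Mm * (3 * \<kappa> + 1))\<^sup>2) = (32 * (Mm * (3 * \<kappa> + 1))\<^sup>2) * (h / real n)"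
    using npos by (simp add: field_simps power2_eq_square)
  have s3a: "(16 / (real n)\<^sup>2) * (2 * Wdev) = 32 * (Wdev / (real n)\<^sup>2)"
    using npos by (simp add: field_simps power2_eq_square)
  have s3b: "(16 / (real n)\<^sup>2) * (2 * real n * Dn\<^sup>2) = 32 * (Dn\<^sup>2 / real n)"
    using npos by (simp add: field_simps power2_eq_square)
  have s4: "(16 / (real n)\<^sup>2) * (real n * (3 * Mm / real n)\<^sup>2) = (144 * Mm\<^sup>2) * (1 / (real n) ^ 3)"
    using npos by (simp add: field_simps power2_eq_square power3_eq_cube)
  have Sb2: "S \<le> (144 * \<kappa>\<^sup>2) * (Lb\<^sup>2 / real n) + (32 * (Mm * (3 * \<kappa> + 1))\<^sup>2) * (h / real n)
      + (32 * (Wdev / (real n)\<^sup>2) + 32 * (Dn\<^sup>2 / real n)) + (144 * Mm\<^sup>2) * (1 / (real n) ^ 3)"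
    using Sb by (simp only: distrib_left[of "16 / (real n)\<^sup>2"] s1 s2 s3a s3b s4)
  have "S \<le> (144 * \<kappa>\<^sup>2) * ((8 * M\<^sup>2 + 4 * M ^ 4) * P0 a) + (32 * (MM * (3 * \<kappa> + 1))\<^sup>2) * P0 a
      + (32 * P0 a + 32 * ((2 * M ^ 4) * P0 a)) + (144 * MM\<^sup>2) * P0 a"
  proof -
    have 1: "(144 * \<kappa>\<^sup>2) * (Lb\<^sup>2 / real n) \<le> (144 * \<kappa>\<^sup>2) * ((8 * M\<^sup>2 + 4 * M ^ 4) * P0 a)"
      by (rule mult_left_mono[OF Lb_facts(1)[OF a0 Dd]]) simp
    have 2: "(32 * (Mm * (3 * \<kappa> + 1))\<^sup>2) * (h / real n) \<le> (32 * (MM * (3 * \<kappa> + 1))\<^sup>2) * P0 a"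
      using Z1 h_n[of a] h0 npos by (intro mult_mono) auto
    have 3: "32 * (Wdev / (real n)\<^sup>2) + 32 * (Dn\<^sup>2 / real n) \<le> 32 * P0 a + 32 * ((2 * M ^ 4) * P0 a)"
      using P0_terms(5)[of a] Dn_facts(4)[OF a0 Dd] by (intro add_mono mult_left_mono) auto
    have 4: "(144 * Mm\<^sup>2) * (1 / (real n) ^ 3) \<le> (144 * MM\<^sup>2) * P0 a"
      using Z3 n3[of a] npos by (intro mult_mono) auto
    show ?thesis using Sb2 add_mono[OF add_mono[OF add_mono[OF 1 2] 3] 4] by (rule order_trans)
  qed
  also have "\<dots> = (16 * (9 * \<kappa>\<^sup>2 * (8 * M\<^sup>2 + 4 * M ^ 4) + 2 * (MM * (3 * \<kappa> + 1))\<^sup>2 + 2 + 4 * M ^ 4 + 9 * MM\<^sup>2)) * P0 a"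
    by (simp add: algebra_simps)
  finally have Sf: "S \<le> (16 * (9 * \<kappa>\<^sup>2 * (8 * M\<^sup>2 + 4 * M ^ 4) + 2 * (MM * (3 * \<kappa> + 1))\<^sup>2 + 2 + 4 * M ^ 4 + 9 * MM\<^sup>2)) * P0 a" .
  have cS: "3 * (3 * E2 * S) \<le> (9 * E2 * (16 * (9 * \<kappa>\<^sup>2 * (8 * M\<^sup>2 + 4 * M ^ 4) + 2 * (MM * (3 * \<kappa> + 1))\<^sup>2 + 2 + 4 * M ^ 4 + 9 * MM\<^sup>2))) * P0 a"
  proof -
    have "9 * E2 * S \<le> 9 * E2 * ((16 * (9 * \<kappa>\<^sup>2 * (8 * M\<^sup>2 + 4 * M ^ 4) + 2 * (MM * (3 * \<kappa> + 1))\<^sup>2 + 2 + 4 * M ^ 4 + 9 * MM\<^sup>2)) * P0 a)"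
      by (rule mult_left_mono[OF Sf]) (use E0 in simp)
    then show ?thesis by (simp add: mult_ac)
  qed
  have d1: "(2 * \<kappa> * Lb\<^sup>2)\<^sup>2 = (4 * \<kappa>\<^sup>2) * (Lb\<^sup>2)\<^sup>2" by (simp add: power_mult_distrib)
  have d2: "(2 * h * (Mm * (Mm * (3 * \<kappa> + 1))))\<^sup>2 = 4 * (Mm * (Mm * (3 * \<kappa> + 1)))\<^sup>2 * h\<^sup>2"
    by (simp add: power_mult_distrib)
  have d3: "(3 * Mm\<^sup>2)\<^sup>2 / (real n)\<^sup>2 = (9 * (Mm\<^sup>2)\<^sup>2) * (1 / (real n)\<^sup>2)"
    by (simp add: power_mult_distrib)
  have "D \<le> 3 * ((4 * \<kappa>\<^sup>2) * ((128 * M ^ 4 + 8 * M ^ 8) * P0 a) + 4 * (MM * (MM * (3 * \<kappa> + 1)))\<^sup>2 * P0 a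
       + (9 * (MM\<^sup>2)\<^sup>2) * P0 a)"
  proof -
    have 1: "(4 * \<kappa>\<^sup>2) * (Lb\<^sup>2)\<^sup>2 \<le> (4 * \<kappa>\<^sup>2) * ((128 * M ^ 4 + 8 * M ^ 8) * P0 a)"
      by (rule mult_left_mono[OF Lb_facts(2)[OF a0 Dd]]) simp
    have 2: "4 * (Mm * (Mm * (3 * \<kappa> + 1)))\<^sup>2 * h\<^sup>2 \<le> 4 * (MM * (MM * (3 * \<kappa> + 1)))\<^sup>2 * P0 a"
      using Z2 P0_terms(3)[of a] by (intro mult_mono) auto
    have 3: "(9 * (Mm\<^sup>2)\<^sup>2) * (1 / (real n)\<^sup>2) \<le> (9 * (MM\<^sup>2)\<^sup>2) * P0 a"
      using Z4 P0_terms(6)[of a] by (intro mult_mono) auto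
    show ?thesis using Db unfolding d1 d2 d3
      using add_mono[OF add_mono[OF 1 2] 3] by (simp add: mult_left_mono)
  qed
  then have cD: "3 * D \<le> (3 * (3 * (4 * \<kappa>\<^sup>2 * (128 * M ^ 4 + 8 * M ^ 8) + 4 * (MM * (MM * (3 * \<kappa> + 1)))\<^sup>2 + 9 * (MM\<^sup>2)\<^sup>2))) * P0 a"
    by (simp add: algebra_simps)
  have "3 * Q + 3 * (3 * E2 * S) + 3 * D \<le>
    (3 * (36 * E2\<^sup>2 * (\<kappa> + 1) * (3 * \<kappa> + 1))) * P0 a
    + (9 * E2 * (16 * (9 * \<kappa>\<^sup>2 * (8 * M\<^sup>2 + 4 * M ^ 4) + 2 * (MM * (3 * \<kappa> + 1))\<^sup>2 + 2 + 4 * M ^ 4 + 9 * MM\<^sup>2))) * P0 a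
    + (3 * (3 * (4 * \<kappa>\<^sup>2 * (128 * M ^ 4 + 8 * M ^ 8) + 4 * (MM * (MM * (3 * \<kappa> + 1)))\<^sup>2 + 9 * (MM\<^sup>2)\<^sup>2))) * P0 a"
    using add_mono[OF add_mono[OF cQ cS] cD] .
  also have "\<dots> = Cf M \<kappa> E2 * P0 a" unfolding Cf_def MM_def by (simp only: distrib_right)
  finally show ?thesis .
qed

end


locale noise = prob_space P for P :: "'a measure" +
  fixes \<xi> :: "nat \<Rightarrow> 'a \<Rightarrow> real"
  assumes \<xi>m[measurable]: "\<And>i. \<xi> i \<in> borel_measurable P"
    and ind: "indep_vars (\<lambda>_. borel) \<xi> UNIV"
    and idd: "\<And>i. distr P borel (\<xi> i) = distr P borel (\<xi> 0)"
    and int1: "integrable P (\<xi> 0)" and ex1: "expectation (\<xi> 0) = 0"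
    and int2: "integrable P (\<lambda>\<omega>. (\<xi> 0 \<omega>)\<^sup>2)" and ex2: "expectation (\<lambda>\<omega>. (\<xi> 0 \<omega>)\<^sup>2) = 1"
    and int4: "integrable P (\<lambda>\<omega>. (\<xi> 0 \<omega>) ^ 4)"
begin

definition "mu4 = expectation (\<lambda>\<omega>. (\<xi> 0 \<omega>) ^ 4)"

lemma idd_transfer:
  fixes g :: "real \<Rightarrow> real"
  assumes g: "g \<in> borel_measurable borel" and i0: "integrable P (\<lambda>\<omega>. g (\<xi> 0 \<omega>))"
  shows "integrable P (\<lambda>\<omega>. g (\<xi> i \<omega>)) \<and> expectation (\<lambda>\<omega>. g (\<xi> i \<omega>)) = expectation (\<lambda>\<omega>. g (\<xi> 0 \<omega>))"
proof -
  have "integrable (distr P borel (\<xi> 0)) g" using i0 integrable_distr_eq[OF \<xi>m[of 0] g] by simp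
  then have "integrable (distr P borel (\<xi> i)) g" using idd[of i] by simp
  then have I: "integrable P (\<lambda>\<omega>. g (\<xi> i \<omega>))" using integrable_distr_eq[OF \<xi>m[of i] g] by simp
  have "expectation (\<lambda>\<omega>. g (\<xi> i \<omega>)) = integral\<^sup>L (distr P borel (\<xi> i)) g" using integral_distr[OF \<xi>m[of i] g] by simp
  also have "\<dots> = integral\<^sup>L (distr P borel (\<xi> 0)) g" using idd[of i] by simp
  also have "\<dots> = expectation (\<lambda>\<omega>. g (\<xi> 0 \<omega>))" using integral_distr[OF \<xi>m[of 0] g] by simp
  finally show ?thesis using I by simp
qed

lemma xi_int1: "integrable P (\<xi> i)" and xi_ex1: "expectation (\<xi> i) = 0"
  using idd_transfer[of "\<lambda>x. x" i] int1 ex1 by auto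
lemma xi_int2: "integrable P (\<lambda>\<omega>. (\<xi> i \<omega>)\<^sup>2)" and xi_ex2: "expectation (\<lambda>\<omega>. (\<xi> i \<omega>)\<^sup>2) = 1"
  using idd_transfer[of "\<lambda>x. x\<^sup>2" i] int2 ex2 by auto
lemma xi_int4: "integrable P (\<lambda>\<omega>. (\<xi> i \<omega>) ^ 4)" and xi_ex4: "expectation (\<lambda>\<omega>. (\<xi> i \<omega>) ^ 4) = mu4"
  using idd_transfer[of "\<lambda>x. x ^ 4" i] int4 unfolding mu4_def by auto

lemma mu4_nonneg: "mu4 \<ge> 0"
  unfolding mu4_def by (rule integral_nonneg_AE) (simp add: zero_le_even_power)

lemma indep_blocks:
  assumes AB: "A \<inter> B = {}"
    and F: "F \<in> borel_measurable (PiM A (\<lambda>_. borel))" and G: "G \<in> borel_measurable (PiM B (\<lambda>_. borel))"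
  shows "indep_var borel (\<lambda>\<omega>. F (restrict (\<lambda>q. \<xi> q \<omega>) A)) borel (\<lambda>\<omega>. G (restrict (\<lambda>q. \<xi> q \<omega>) B))"
proof -
  have "indep_var borel (F \<circ> (\<lambda>\<omega>. restrict (\<lambda>q. \<xi> q \<omega>) A)) borel (G \<circ> (\<lambda>\<omega>. restrict (\<lambda>q. \<xi> q \<omega>) B))"
    by (rule indep_var_compose[OF indep_var_restrict[OF ind AB] F G]) auto
  then show ?thesis by (simp add: comp_def)
qed

lemma xi_pair: assumes "i \<noteq> j"
  shows "integrable P (\<lambda>\<omega>. \<xi> i \<omega> * \<xi> j \<omega>) \<and> expectation (\<lambda>\<omega>. \<xi> i \<omega> * \<xi> j \<omega>) = 0"
proof -
  have "indep_var borel (\<lambda>\<omega>. (\<lambda>x. x i) (restrict (\<lambda>q. \<xi> q \<omega>) {i})) borel (\<lambda>\<omega>. (\<lambda>x. x j) (restrict (\<lambda>q. \<xi> q \<omega>) {j}))"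
    by (rule indep_blocks) (use assms in \<open>auto intro: measurable_component_singleton\<close>)
  then have iv: "indep_var borel (\<xi> i) borel (\<xi> j)" by (simp add: restrict_def)
  show ?thesis
    using indep_var_lebesgue_integral[OF iv xi_int1 xi_int1] indep_var_integrable[OF iv xi_int1 xi_int1] xi_ex1
    by simp
qed

end


lemma sq3: "((a::real) + b + c)\<^sup>2 \<le> 3 * (a\<^sup>2 + b\<^sup>2 + c\<^sup>2)"
proof -
  have "3 * (a\<^sup>2 + b\<^sup>2 + c\<^sup>2) - (a + b + c)\<^sup>2 = (a-b)\<^sup>2 + (a-c)\<^sup>2 + (b-c)\<^sup>2"
    by (simp add: power2_eq_square algebra_simps)
  moreover have "0 \<le> (a-b)\<^sup>2 + (a-c)\<^sup>2 + (b-c)\<^sup>2" by simp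
  ultimately show ?thesis by linarith
qed

lemma sq_diff2: "((x::real) - y)\<^sup>2 \<le> 2 * x\<^sup>2 + 2 * y\<^sup>2"
proof -
  have "2 * x\<^sup>2 + 2 * y\<^sup>2 - (x - y)\<^sup>2 = (x + y)\<^sup>2" by (simp add: power2_eq_square algebra_simps)
  moreover have "0 \<le> (x + y)\<^sup>2" by simp
  ultimately show ?thesis by linarith
qed

lemma pow4_3: "((a::real) + b + c) ^ 4 \<le> 27 * (a ^ 4 + b ^ 4 + c ^ 4)"
proof -
  have "((a + b + c)\<^sup>2)\<^sup>2 \<le> (3 * (a\<^sup>2 + b\<^sup>2 + c\<^sup>2))\<^sup>2"
    by (rule power_mono[OF sq3]) simp
  also have "\<dots> = 9 * (a\<^sup>2 + b\<^sup>2 + c\<^sup>2)\<^sup>2" unfolding power_mult_distrib by simp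
  also have "\<dots> \<le> 9 * (3 * ((a\<^sup>2)\<^sup>2 + (b\<^sup>2)\<^sup>2 + (c\<^sup>2)\<^sup>2))" by (rule mult_left_mono[OF sq3]) simp
  finally show ?thesis by (simp add: power_mult[symmetric])
qed

locale model = noise P \<xi> for P :: "'a measure" and \<xi> +
  fixes n :: nat and dl sv :: "nat \<Rightarrow> real" and M :: real
  assumes M0: "M > 0" and dlM: "\<And>i. i < n \<Longrightarrow> \<bar>dl i\<bar> \<le> M"
    and sv0: "\<And>q. q \<le> n \<Longrightarrow> 0 \<le> sv q" and svM: "\<And>q. q \<le> n \<Longrightarrow> (sv q)\<^sup>2 \<le> M"
begin

definition "mm i = (sv (Suc i))\<^sup>2 + (sv i)\<^sup>2 + (dl i)\<^sup>2"
definition "e i x = (dl i + sv (Suc i) * x (Suc i) - sv i * x i)\<^sup>2 - mm i"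
definition "eps i \<omega> = e i (\<lambda>q. \<xi> q \<omega>)"
definition "rr i \<omega> = dl i + sv (Suc i) * \<xi> (Suc i) \<omega> - sv i * \<xi> i \<omega>"
definition "E2 = 54 * (M ^ 4 + 2 * M\<^sup>2 * mu4) + 2 * (2 * M + M\<^sup>2)\<^sup>2"

lemma eps_alt: "eps i \<omega> = (rr i \<omega>)\<^sup>2 - mm i" unfolding eps_def e_def rr_def by simp

lemma eps_meas[measurable]: "eps i \<in> borel_measurable P" unfolding eps_def e_def by measurable
lemma rr_meas[measurable]: "rr i \<in> borel_measurable P" unfolding rr_def by measurable

lemma e_meas:
  assumes "i \<in> A" "Suc i \<in> A"
  shows "e i \<in> borel_measurable (PiM A (\<lambda>_. borel))"
proof -
  have [measurable]: "(\<lambda>x. x i) \<in> borel_measurable (PiM A (\<lambda>_. borel))"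
    by (rule measurable_component_singleton) (rule assms(1))
  have [measurable]: "(\<lambda>x. x (Suc i)) \<in> borel_measurable (PiM A (\<lambda>_. borel))"
    by (rule measurable_component_singleton) (rule assms(2))
  show ?thesis unfolding e_def by measurable
qed

lemma eps_restr:
  assumes "i \<in> A" "Suc i \<in> A"
  shows "eps i \<omega> = e i (restrict (\<lambda>q. \<xi> q \<omega>) A)"
  unfolding eps_def e_def using assms by simp

lemma mm_bound: "i < n \<Longrightarrow> 0 \<le> mm i \<and> mm i \<le> 2 * M + M\<^sup>2"
proof -
  assume i: "i < n"
  have "(dl i)\<^sup>2 \<le> M\<^sup>2" using dlM[OF i] M0 abs_le_square_iff[of "dl i" M] by simp
  then show ?thesis unfolding mm_def using svM[of i] svM[of "Suc i"] i by simp
qed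

lemma rr_sq: "i < n \<Longrightarrow> integrable P (\<lambda>\<omega>. (rr i \<omega>)\<^sup>2) \<and> expectation (\<lambda>\<omega>. (rr i \<omega>)\<^sup>2) = mm i"
proof -
  assume i: "i < n"
  define a b c where "a = sv (Suc i)" and "b = sv i" and "c = dl i"
  have eq: "(\<lambda>\<omega>. (rr i \<omega>)\<^sup>2) = (\<lambda>\<omega>. (c\<^sup>2 + a\<^sup>2 * (\<xi> (Suc i) \<omega>)\<^sup>2 + b\<^sup>2 * (\<xi> i \<omega>)\<^sup>2)
     + ((2 * c * a) * \<xi> (Suc i) \<omega> - (2 * c * b) * \<xi> i \<omega> - (2 * a * b) * (\<xi> i \<omega> * \<xi> (Suc i) \<omega>)))"
    unfolding rr_def a_def b_def c_def by (auto simp: power2_eq_square algebra_simps)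
  have p: "integrable P (\<lambda>\<omega>. \<xi> i \<omega> * \<xi> (Suc i) \<omega>)" "expectation (\<lambda>\<omega>. \<xi> i \<omega> * \<xi> (Suc i) \<omega>) = 0"
    using xi_pair[of i "Suc i"] by auto
  have h: "has_bochner_integral P (\<lambda>\<omega>. (c\<^sup>2 + a\<^sup>2 * (\<xi> (Suc i) \<omega>)\<^sup>2 + b\<^sup>2 * (\<xi> i \<omega>)\<^sup>2)
     + ((2 * c * a) * \<xi> (Suc i) \<omega> - (2 * c * b) * \<xi> i \<omega> - (2 * a * b) * (\<xi> i \<omega> * \<xi> (Suc i) \<omega>)))
     ((c\<^sup>2 + a\<^sup>2 * 1 + b\<^sup>2 * 1) + ((2 * c * a) * 0 - (2 * c * b) * 0 - (2 * a * b) * 0))"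
    apply (intro has_bochner_integral_add has_bochner_integral_diff has_bochner_integral_mult_right)
    using xi_int1 xi_ex1 xi_int2 xi_ex2 p prob_space
    by (auto simp: has_bochner_integral_iff)
  show ?thesis using h unfolding eq has_bochner_integral_iff mm_def a_def b_def c_def by simp
qed

lemma eps_sq: "i < n \<Longrightarrow> integrable P (\<lambda>\<omega>. (eps i \<omega>)\<^sup>2) \<and> expectation (\<lambda>\<omega>. (eps i \<omega>)\<^sup>2) \<le> E2"
proof -
  assume i: "i < n"
  define B where "B \<omega> = 54 * (M ^ 4 + M\<^sup>2 * (\<xi> (Suc i) \<omega>) ^ 4 + M\<^sup>2 * (\<xi> i \<omega>) ^ 4) + 2 * (mm i)\<^sup>2" for \<omega>
  have Bint: "integrable P B" unfolding B_def using xi_int4 by auto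
  have BE: "expectation B = 54 * (M ^ 4 + M\<^sup>2 * mu4 + M\<^sup>2 * mu4) + 2 * (mm i)\<^sup>2"
    unfolding B_def using xi_int4 xi_ex4 prob_space by (simp add: integral_add)
  have pw: "(eps i \<omega>)\<^sup>2 \<le> B \<omega>" for \<omega>
  proof -
    have d4: "(dl i) ^ 4 \<le> M ^ 4"
    proof -
      have "\<bar>dl i\<bar> ^ 4 \<le> M ^ 4" by (rule power_mono) (use dlM[OF i] in auto)
      then show ?thesis by (simp add: power_even_abs_numeral)
    qed
    have s4: "(sv q) ^ 4 \<le> M\<^sup>2" if "q \<le> n" for q
    proof -
      have "((sv q)\<^sup>2)\<^sup>2 \<le> M\<^sup>2" by (rule power_mono) (use svM[OF that] in auto)
      then show ?thesis by (simp add: power_mult[symmetric])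
    qed
    have s1: "(sv (Suc i)) ^ 4 \<le> M\<^sup>2" using s4 i by simp
    have s2: "(sv i) ^ 4 \<le> M\<^sup>2" using s4 i by simp
    have "(rr i \<omega>) ^ 4 \<le> 27 * ((dl i) ^ 4 + (sv (Suc i) * \<xi> (Suc i) \<omega>) ^ 4 + (- sv i * \<xi> i \<omega>) ^ 4)"
      using pow4_3[of "dl i" "sv (Suc i) * \<xi> (Suc i) \<omega>" "- sv i * \<xi> i \<omega>"] unfolding rr_def by simp
    also have "\<dots> \<le> 27 * (M ^ 4 + M\<^sup>2 * (\<xi> (Suc i) \<omega>) ^ 4 + M\<^sup>2 * (\<xi> i \<omega>) ^ 4)"
      using d4 s1 s2 by (intro mult_left_mono add_mono) (auto simp: power_mult_distrib intro!: mult_right_mono)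
    finally have r4: "(rr i \<omega>) ^ 4 \<le> 27 * (M ^ 4 + M\<^sup>2 * (\<xi> (Suc i) \<omega>) ^ 4 + M\<^sup>2 * (\<xi> i \<omega>) ^ 4)" .
    have "(eps i \<omega>)\<^sup>2 \<le> 2 * ((rr i \<omega>)\<^sup>2)\<^sup>2 + 2 * (mm i)\<^sup>2"
      unfolding eps_alt by (rule sq_diff2)
    also have "((rr i \<omega>)\<^sup>2)\<^sup>2 = (rr i \<omega>) ^ 4" by (simp add: power_mult[symmetric])
    finally show ?thesis unfolding B_def using r4 by linarith
  qed
  have int: "integrable P (\<lambda>\<omega>. (eps i \<omega>)\<^sup>2)"
    by (rule Bochner_Integration.integrable_bound[OF Bint]) (use pw in \<open>auto intro!: AE_I2 order_trans[OF _ abs_ge_self]\<close>)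
  have "expectation (\<lambda>\<omega>. (eps i \<omega>)\<^sup>2) \<le> expectation B" by (rule integral_mono[OF int Bint pw])
  also have "\<dots> \<le> E2"
  proof -
    have "(mm i)\<^sup>2 \<le> (2 * M + M\<^sup>2)\<^sup>2" using mm_bound[OF i] by (intro power_mono) auto
    then show ?thesis unfolding BE E2_def by simp
  qed
  finally show ?thesis using int by simp
qed

lemma eps_int: "i < n \<Longrightarrow> integrable P (eps i) \<and> expectation (eps i) = 0"
proof -
  assume i: "i < n"
  have I: "integrable P (eps i)"
    by (rule square_integrable_imp_integrable) (use eps_sq[OF i] in auto)
  have "expectation (eps i) = expectation (\<lambda>\<omega>. (rr i \<omega>)\<^sup>2) - mm i"
    unfolding eps_alt using rr_sq[OF i] prob_space by (simp add: integral_diff)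
  then show ?thesis using I rr_sq[OF i] by simp
qed

lemma E2_nonneg: "E2 \<ge> 0" unfolding E2_def using mu4_nonneg by simp

end


lemma abs_prod_le: "\<bar>(x::real) * y\<bar> \<le> (x\<^sup>2 + y\<^sup>2) / 2"
proof -
  have "0 \<le> (\<bar>x\<bar> - \<bar>y\<bar>)\<^sup>2" by simp
  then show ?thesis by (simp add: power2_eq_square algebra_simps abs_mult)
qed

lemma half_sum: "A \<and> (x::real) \<le> (a + b) / 2 \<Longrightarrow> a \<le> E \<Longrightarrow> b \<le> E \<Longrightarrow> A \<and> x \<le> E"
  by auto

context model begin

lemma bound_int:
  fixes f X Y :: "'a \<Rightarrow> real"
  assumes f[measurable]: "f \<in> borel_measurable P" and X: "integrable P (\<lambda>\<omega>. (X \<omega>)\<^sup>2)" and Y: "integrable P (\<lambda>\<omega>. (Y \<omega>)\<^sup>2)"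
    and fb: "\<And>\<omega>. f \<omega> = X \<omega> * Y \<omega>"
  shows "integrable P f \<and> \<bar>expectation f\<bar> \<le> (expectation (\<lambda>\<omega>. (X \<omega>)\<^sup>2) + expectation (\<lambda>\<omega>. (Y \<omega>)\<^sup>2)) / 2"
proof -
  have Bi: "integrable P (\<lambda>\<omega>. ((X \<omega>)\<^sup>2 + (Y \<omega>)\<^sup>2) / 2)" using X Y by auto
  have pw: "\<bar>f \<omega>\<bar> \<le> ((X \<omega>)\<^sup>2 + (Y \<omega>)\<^sup>2) / 2" for \<omega> unfolding fb by (rule abs_prod_le)
  have I: "integrable P f"
    by (rule Bochner_Integration.integrable_bound[OF Bi f]) (use pw in \<open>auto intro!: AE_I2 order_trans[OF _ abs_ge_self]\<close>)
  have "\<bar>expectation f\<bar> \<le> expectation (\<lambda>\<omega>. \<bar>f \<omega>\<bar>)" by (rule integral_abs_bound)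
  also have "\<dots> \<le> expectation (\<lambda>\<omega>. ((X \<omega>)\<^sup>2 + (Y \<omega>)\<^sup>2) / 2)"
    by (rule integral_mono) (use I Bi pw in auto)
  also have "\<dots> = (expectation (\<lambda>\<omega>. (X \<omega>)\<^sup>2) + expectation (\<lambda>\<omega>. (Y \<omega>)\<^sup>2)) / 2"
    using X Y by (simp add: integral_add)
  finally show ?thesis using I by simp
qed

lemma eps_pair:
  assumes "i < n" "k < n"
  shows "integrable P (\<lambda>\<omega>. eps i \<omega> * eps k \<omega>) \<and> \<bar>expectation (\<lambda>\<omega>. eps i \<omega> * eps k \<omega>)\<bar> \<le> E2"
proof -
  have "integrable P (\<lambda>\<omega>. eps i \<omega> * eps k \<omega>) \<and> \<bar>expectation (\<lambda>\<omega>. eps i \<omega> * eps k \<omega>)\<bar>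
     \<le> (expectation (\<lambda>\<omega>. (eps i \<omega>)\<^sup>2) + expectation (\<lambda>\<omega>. (eps k \<omega>)\<^sup>2)) / 2"
    by (rule bound_int) (use eps_sq assms in auto)
  then show ?thesis by (rule half_sum) (use eps_sq[OF assms(1)] eps_sq[OF assms(2)] in simp_all)
qed

lemma eps_pair_zero:
  assumes "i < n" "k < n" "2 \<le> \<bar>int i - int k\<bar>"
  shows "expectation (\<lambda>\<omega>. eps i \<omega> * eps k \<omega>) = 0"
proof -
  have d: "{i, Suc i} \<inter> {k, Suc k} = {}" using assms(3) by auto
  have iv: "indep_var borel (\<lambda>\<omega>. e i (restrict (\<lambda>q. \<xi> q \<omega>) {i, Suc i})) borel (\<lambda>\<omega>. e k (restrict (\<lambda>q. \<xi> q \<omega>) {k, Suc k}))"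
    by (rule indep_blocks[OF d]) (auto intro: e_meas)
  have r1: "(\<lambda>\<omega>. e i (restrict (\<lambda>q. \<xi> q \<omega>) {i, Suc i})) = eps i" using eps_restr[of i "{i, Suc i}"] by auto
  have r2: "(\<lambda>\<omega>. e k (restrict (\<lambda>q. \<xi> q \<omega>) {k, Suc k})) = eps k" using eps_restr[of k "{k, Suc k}"] by auto
  have iv2: "indep_var borel (eps i) borel (eps k)" using iv unfolding r1 r2 .
  show ?thesis using indep_var_lebesgue_integral[OF iv2] eps_int[OF assms(1)] eps_int[OF assms(2)] by simp
qed

lemma eps_sq_pair:
  assumes "i < n" "j < n" "2 \<le> \<bar>int i - int j\<bar>"
  shows "integrable P (\<lambda>\<omega>. (eps i \<omega> * eps j \<omega>)\<^sup>2) \<and> expectation (\<lambda>\<omega>. (eps i \<omega> * eps j \<omega>)\<^sup>2) \<le> E2\<^sup>2"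
proof -
  have d: "{i, Suc i} \<inter> {j, Suc j} = {}" using assms(3) by auto
  have m: "(\<lambda>x. (e q x)\<^sup>2) \<in> borel_measurable (PiM {q, Suc q} (\<lambda>_. borel))" for q
    using e_meas[of q "{q, Suc q}"] by measurable
  have iv: "indep_var borel (\<lambda>\<omega>. (e i (restrict (\<lambda>q. \<xi> q \<omega>) {i, Suc i}))\<^sup>2) borel (\<lambda>\<omega>. (e j (restrict (\<lambda>q. \<xi> q \<omega>) {j, Suc j}))\<^sup>2)"
    by (rule indep_blocks[OF d m m])
  have r1: "(\<lambda>\<omega>. (e i (restrict (\<lambda>q. \<xi> q \<omega>) {i, Suc i}))\<^sup>2) = (\<lambda>\<omega>. (eps i \<omega>)\<^sup>2)" using eps_restr[of i "{i, Suc i}"] by auto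
  have r2: "(\<lambda>\<omega>. (e j (restrict (\<lambda>q. \<xi> q \<omega>) {j, Suc j}))\<^sup>2) = (\<lambda>\<omega>. (eps j \<omega>)\<^sup>2)" using eps_restr[of j "{j, Suc j}"] by auto
  have iv2: "indep_var borel (\<lambda>\<omega>. (eps i \<omega>)\<^sup>2) borel (\<lambda>\<omega>. (eps j \<omega>)\<^sup>2)" using iv unfolding r1 r2 .
  have I: "integrable P (\<lambda>\<omega>. (eps i \<omega>)\<^sup>2 * (eps j \<omega>)\<^sup>2)"
    using indep_var_integrable[OF iv2] eps_sq[OF assms(1)] eps_sq[OF assms(2)] by simp
  have E: "expectation (\<lambda>\<omega>. (eps i \<omega>)\<^sup>2 * (eps j \<omega>)\<^sup>2) = expectation (\<lambda>\<omega>. (eps i \<omega>)\<^sup>2) * expectation (\<lambda>\<omega>. (eps j \<omega>)\<^sup>2)"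
    using indep_var_lebesgue_integral[OF iv2] eps_sq[OF assms(1)] eps_sq[OF assms(2)] by simp
  have n1: "0 \<le> expectation (\<lambda>\<omega>. (eps i \<omega>)\<^sup>2)" by (rule integral_nonneg_AE) simp
  have n2: "0 \<le> expectation (\<lambda>\<omega>. (eps j \<omega>)\<^sup>2)" by (rule integral_nonneg_AE) simp
  have prodle: "expectation (\<lambda>\<omega>. (eps i \<omega>)\<^sup>2) * expectation (\<lambda>\<omega>. (eps j \<omega>)\<^sup>2) \<le> E2 * E2"
    using eps_sq[OF assms(1)] eps_sq[OF assms(2)] n1 n2 E2_nonneg by (intro mult_mono) auto
  have fe: "(\<lambda>\<omega>. (eps i \<omega> * eps j \<omega>)\<^sup>2) = (\<lambda>\<omega>. (eps i \<omega>)\<^sup>2 * (eps j \<omega>)\<^sup>2)"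
    by (simp add: power_mult_distrib)
  have le: "expectation (\<lambda>\<omega>. (eps i \<omega>)\<^sup>2 * (eps j \<omega>)\<^sup>2) \<le> E2\<^sup>2"
    unfolding E power2_eq_square[of E2] by (rule prodle)
  show ?thesis unfolding fe using I le by blast
qed

lemma quad_int:
  assumes "i < n" "j < n" "k < n" "l < n" "2 \<le> \<bar>int i - int j\<bar>" "2 \<le> \<bar>int k - int l\<bar>"
  shows "integrable P (\<lambda>\<omega>. eps i \<omega> * eps j \<omega> * eps k \<omega> * eps l \<omega>) \<and>
    \<bar>expectation (\<lambda>\<omega>. eps i \<omega> * eps j \<omega> * eps k \<omega> * eps l \<omega>)\<bar> \<le> E2\<^sup>2"
proof -
  have "integrable P (\<lambda>\<omega>. eps i \<omega> * eps j \<omega> * eps k \<omega> * eps l \<omega>) \<and>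
    \<bar>expectation (\<lambda>\<omega>. eps i \<omega> * eps j \<omega> * eps k \<omega> * eps l \<omega>)\<bar> \<le>
    (expectation (\<lambda>\<omega>. (eps i \<omega> * eps j \<omega>)\<^sup>2) + expectation (\<lambda>\<omega>. (eps k \<omega> * eps l \<omega>)\<^sup>2)) / 2"
    by (rule bound_int) (use eps_sq_pair assms in auto)
  then show ?thesis by (rule half_sum) (use eps_sq_pair[OF assms(1,2,5)] eps_sq_pair[OF assms(3,4,6)] in simp_all)
qed

lemma quad_zero:
  assumes "i < n" "j < n" "k < n" "l < n" "2 \<le> \<bar>int i - int j\<bar>"
    and "2 \<le> \<bar>int k - int i\<bar>" "2 \<le> \<bar>int k - int j\<bar>" "2 \<le> \<bar>int k - int l\<bar>"
  shows "expectation (\<lambda>\<omega>. eps k \<omega> * (eps i \<omega> * eps j \<omega> * eps l \<omega>)) = 0"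
proof -
  define B where "B = {i, Suc i, j, Suc j, l, Suc l}"
  have d: "{k, Suc k} \<inter> B = {}" using assms(6-8) unfolding B_def by auto
  have G: "(\<lambda>x. e i x * e j x * e l x) \<in> borel_measurable (PiM B (\<lambda>_. borel))"
    using e_meas[of i B] e_meas[of j B] e_meas[of l B] unfolding B_def by measurable
  have iv: "indep_var borel (\<lambda>\<omega>. e k (restrict (\<lambda>q. \<xi> q \<omega>) {k, Suc k}))
     borel (\<lambda>\<omega>. (\<lambda>x. e i x * e j x * e l x) (restrict (\<lambda>q. \<xi> q \<omega>) B))"
    by (rule indep_blocks[OF d _ G]) (auto intro: e_meas)
  have r1: "(\<lambda>\<omega>. e k (restrict (\<lambda>q. \<xi> q \<omega>) {k, Suc k})) = eps k" using eps_restr[of k "{k, Suc k}"] by auto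
  have r2: "(\<lambda>\<omega>. (\<lambda>x. e i x * e j x * e l x) (restrict (\<lambda>q. \<xi> q \<omega>) B)) = (\<lambda>\<omega>. eps i \<omega> * eps j \<omega> * eps l \<omega>)"
    using eps_restr[of i B] eps_restr[of j B] eps_restr[of l B] unfolding B_def by auto
  have iv2: "indep_var borel (eps k) borel (\<lambda>\<omega>. eps i \<omega> * eps j \<omega> * eps l \<omega>)" using iv unfolding r1 r2 .
  have IY: "integrable P (\<lambda>\<omega>. eps i \<omega> * eps j \<omega> * eps l \<omega>)"
  proof -
    have "integrable P (\<lambda>\<omega>. eps i \<omega> * eps j \<omega> * eps l \<omega>) \<and> \<bar>expectation (\<lambda>\<omega>. eps i \<omega> * eps j \<omega> * eps l \<omega>)\<bar>
      \<le> (expectation (\<lambda>\<omega>. (eps i \<omega> * eps j \<omega>)\<^sup>2) + expectation (\<lambda>\<omega>. (eps l \<omega>)\<^sup>2)) / 2"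
      by (rule bound_int) (use eps_sq_pair eps_sq assms in auto)
    then show ?thesis by simp
  qed
  show ?thesis using indep_var_lebesgue_integral[OF iv2 _ IY] eps_int[OF assms(3)] by simp
qed

end


lemma card_near: "card {k. k < n \<and> \<bar>int k - int i\<bar> < 2} \<le> 3"
proof -
  have "{k. k < n \<and> \<bar>int k - int i\<bar> < 2} \<subseteq> {i - 1..i + 1}" by auto
  then have "card {k. k < n \<and> \<bar>int k - int i\<bar> < 2} \<le> card {i - 1..i + 1}" by (intro card_mono) auto
  also have "\<dots> \<le> 3" by simp
  finally show ?thesis .
qed

lemma (in prob_space) int_sum2:
  fixes T :: "'i \<Rightarrow> 'j \<Rightarrow> 'a \<Rightarrow> real"
  assumes "\<And>i k. i \<in> A \<Longrightarrow> k \<in> B \<Longrightarrow> integrable M (T i k)"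
  shows "integrable M (\<lambda>\<omega>. \<Sum>i\<in>A. \<Sum>k\<in>B. T i k \<omega>) \<and>
    expectation (\<lambda>\<omega>. \<Sum>i\<in>A. \<Sum>k\<in>B. T i k \<omega>) = (\<Sum>i\<in>A. \<Sum>k\<in>B. expectation (T i k))"
proof -
  have I1: "integrable M (\<lambda>\<omega>. \<Sum>k\<in>B. T i k \<omega>)" if "i \<in> A" for i
    by (rule Bochner_Integration.integrable_sum) (use assms that in auto)
  have "expectation (\<lambda>\<omega>. \<Sum>i\<in>A. \<Sum>k\<in>B. T i k \<omega>) = (\<Sum>i\<in>A. expectation (\<lambda>\<omega>. \<Sum>k\<in>B. T i k \<omega>))"
    by (rule Bochner_Integration.integral_sum) (rule I1)
  also have "\<dots> = (\<Sum>i\<in>A. \<Sum>k\<in>B. expectation (T i k))"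
  proof (rule sum.cong[OF refl])
    fix i assume "i \<in> A"
    show "expectation (\<lambda>\<omega>. \<Sum>k\<in>B. T i k \<omega>) = (\<Sum>k\<in>B. expectation (T i k))"
      by (rule Bochner_Integration.integral_sum) (use assms \<open>i \<in> A\<close> in auto)
  qed
  finally show ?thesis using I1 by (auto intro!: Bochner_Integration.integrable_sum)
qed

context model begin

lemma Q_bound:
  fixes G :: "nat \<Rightarrow> nat \<Rightarrow> real"
  assumes G0: "\<And>i j. \<not> 2 \<le> \<bar>int i - int j\<bar> \<Longrightarrow> G i j = 0" and Gm: "\<And>i j. \<bar>G i j\<bar> \<le> Gm"
  shows "integrable P (\<lambda>\<omega>. (\<Sum>i<n. \<Sum>j<n. G i j * (eps i \<omega> * eps j \<omega>))\<^sup>2) \<and>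
    expectation (\<lambda>\<omega>. (\<Sum>i<n. \<Sum>j<n. G i j * (eps i \<omega> * eps j \<omega>))\<^sup>2) \<le> 36 * E2\<^sup>2 * Gm * (\<Sum>i<n. \<Sum>j<n. \<bar>G i j\<bar>)"
proof -
  define qd where "qd i j k l \<omega> = eps i \<omega> * eps j \<omega> * eps k \<omega> * eps l \<omega>" for i j k l \<omega>
  define T where "T i j k l \<omega> = G i j * G k l * qd i j k l \<omega>" for i j k l \<omega>
  have sqe: "(\<Sum>i<n. \<Sum>j<n. G i j * (eps i \<omega> * eps j \<omega>))\<^sup>2 = (\<Sum>i<n. \<Sum>j<n. \<Sum>k<n. \<Sum>l<n. T i j k l \<omega>)" for \<omega>
    unfolding T_def qd_def power2_eq_square sum_distrib_left sum_distrib_right by (simp add: mult_ac)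
  have Tint: "integrable P (T i j k l)" if "i < n" "j < n" "k < n" "l < n" for i j k l
  proof (cases "2 \<le> \<bar>int i - int j\<bar> \<and> 2 \<le> \<bar>int k - int l\<bar>")
    case True
    then have "integrable P (qd i j k l)" using quad_int[OF that] unfolding qd_def by auto
    then show ?thesis unfolding T_def by auto
  next
    case False
    then have "T i j k l = (\<lambda>_. 0)" unfolding T_def using G0 by (auto simp: fun_eq_iff)
    then show ?thesis by simp
  qed
  have Ibig: "integrable P (\<lambda>\<omega>. \<Sum>i<n. \<Sum>j<n. \<Sum>k<n. \<Sum>l<n. T i j k l \<omega>)"
    by (intro Bochner_Integration.integrable_sum) (auto intro: Tint)
  have Ebig: "expectation (\<lambda>\<omega>. \<Sum>i<n. \<Sum>j<n. \<Sum>k<n. \<Sum>l<n. T i j k l \<omega>) =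
      (\<Sum>i<n. \<Sum>j<n. \<Sum>k<n. \<Sum>l<n. G i j * G k l * expectation (qd i j k l))"
  proof -
    have T2: "integrable P (\<lambda>\<omega>. \<Sum>k<n. \<Sum>l<n. T i j k l \<omega>) \<and> expectation (\<lambda>\<omega>. \<Sum>k<n. \<Sum>l<n. T i j k l \<omega>) =
      (\<Sum>k<n. \<Sum>l<n. expectation (T i j k l))" if "i < n" "j < n" for i j
      by (rule int_sum2) (use Tint that in auto)
    have "expectation (\<lambda>\<omega>. \<Sum>i<n. \<Sum>j<n. \<Sum>k<n. \<Sum>l<n. T i j k l \<omega>) =
      (\<Sum>i<n. \<Sum>j<n. expectation (\<lambda>\<omega>. \<Sum>k<n. \<Sum>l<n. T i j k l \<omega>))"
      using int_sum2[of "{..<n}" "{..<n}" "\<lambda>i j \<omega>. \<Sum>k<n. \<Sum>l<n. T i j k l \<omega>"] T2 by auto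
    also have "\<dots> = (\<Sum>i<n. \<Sum>j<n. \<Sum>k<n. \<Sum>l<n. expectation (T i j k l))"
      using T2 by (intro sum.cong refl) auto
    finally have "expectation (\<lambda>\<omega>. \<Sum>i<n. \<Sum>j<n. \<Sum>k<n. \<Sum>l<n. T i j k l \<omega>) =
      (\<Sum>i<n. \<Sum>j<n. \<Sum>k<n. \<Sum>l<n. expectation (T i j k l))" .
    also have "\<dots> = (\<Sum>i<n. \<Sum>j<n. \<Sum>k<n. \<Sum>l<n. G i j * G k l * expectation (qd i j k l))"
      unfolding T_def by (simp add: mult.assoc)
    finally show ?thesis .
  qed
  have inner: "(\<Sum>k<n. \<Sum>l<n. \<bar>G k l\<bar> * \<bar>expectation (qd i j k l)\<bar>) \<le> 36 * E2\<^sup>2 * Gm"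
    if ij: "i < n" "j < n" "2 \<le> \<bar>int i - int j\<bar>" for i j
  proof -
    define Nb where "Nb = {k. k < n \<and> (\<bar>int k - int i\<bar> < 2 \<or> \<bar>int k - int j\<bar> < 2)}"
    have Nbs: "Nb \<subseteq> {..<n}" unfolding Nb_def by auto
    have cNb: "card Nb \<le> 6"
    proof -
      have "Nb \<subseteq> {k. k < n \<and> \<bar>int k - int i\<bar> < 2} \<union> {k. k < n \<and> \<bar>int k - int j\<bar> < 2}" unfolding Nb_def by auto
      then have "card Nb \<le> card ({k. k < n \<and> \<bar>int k - int i\<bar> < 2} \<union> {k. k < n \<and> \<bar>int k - int j\<bar> < 2})"
        by (intro card_mono) auto
      also have "\<dots> \<le> card {k. k < n \<and> \<bar>int k - int i\<bar> < 2} + card {k. k < n \<and> \<bar>int k - int j\<bar> < 2}"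
        by (rule card_Un_le)
      also have "\<dots> \<le> 6" using card_near[of n i] card_near[of n j] by linarith
      finally show ?thesis .
    qed
    have z: "\<bar>G k l\<bar> * \<bar>expectation (qd i j k l)\<bar> = 0" if kl: "k < n" "l < n" "k \<notin> Nb \<or> l \<notin> Nb" for k l
    proof (cases "2 \<le> \<bar>int k - int l\<bar>")
      case False then show ?thesis using G0 by simp
    next
      case True
      have "expectation (qd i j k l) = 0"
      proof (cases "k \<notin> Nb")
        case True
        then have "2 \<le> \<bar>int k - int i\<bar>" "2 \<le> \<bar>int k - int j\<bar>" using kl unfolding Nb_def by auto
        then have "expectation (\<lambda>\<omega>. eps k \<omega> * (eps i \<omega> * eps j \<omega> * eps l \<omega>)) = 0"
          using quad_zero[OF ij(1,2) kl(1,2) ij(3)] \<open>2 \<le> \<bar>int k - int l\<bar>\<close> by auto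
        moreover have "qd i j k l = (\<lambda>\<omega>. eps k \<omega> * (eps i \<omega> * eps j \<omega> * eps l \<omega>))"
          unfolding qd_def by (auto simp: fun_eq_iff mult_ac)
        ultimately show ?thesis by simp
      next
        case False
        then have "l \<notin> Nb" using kl by auto
        then have "2 \<le> \<bar>int l - int i\<bar>" "2 \<le> \<bar>int l - int j\<bar>" using kl unfolding Nb_def by auto
        moreover have "2 \<le> \<bar>int l - int k\<bar>" using \<open>2 \<le> \<bar>int k - int l\<bar>\<close> by linarith
        ultimately have "expectation (\<lambda>\<omega>. eps l \<omega> * (eps i \<omega> * eps j \<omega> * eps k \<omega>)) = 0"
          using quad_zero[OF ij(1,2) kl(2,1) ij(3)] by auto
        moreover have "qd i j k l = (\<lambda>\<omega>. eps l \<omega> * (eps i \<omega> * eps j \<omega> * eps k \<omega>))"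
          unfolding qd_def by (auto simp: fun_eq_iff mult_ac)
        ultimately show ?thesis by simp
      qed
      then show ?thesis by simp
    qed
    have b: "\<bar>G k l\<bar> * \<bar>expectation (qd i j k l)\<bar> \<le> Gm * E2\<^sup>2" if kl: "k < n" "l < n" for k l
    proof (cases "2 \<le> \<bar>int k - int l\<bar>")
      case False then show ?thesis using G0 Gm[of k l] E2_nonneg by simp
    next
      case True
      have "\<bar>expectation (qd i j k l)\<bar> \<le> E2\<^sup>2" using quad_int[OF ij(1,2) kl ij(3) True] unfolding qd_def by auto
      then show ?thesis using Gm[of k l] by (intro mult_mono) auto
    qed
    have "(\<Sum>k<n. \<Sum>l<n. \<bar>G k l\<bar> * \<bar>expectation (qd i j k l)\<bar>) = (\<Sum>k\<in>Nb. \<Sum>l<n. \<bar>G k l\<bar> * \<bar>expectation (qd i j k l)\<bar>)"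
      by (rule sum.mono_neutral_right) (use Nbs z in \<open>auto intro!: sum.neutral\<close>)
    also have "\<dots> = (\<Sum>k\<in>Nb. \<Sum>l\<in>Nb. \<bar>G k l\<bar> * \<bar>expectation (qd i j k l)\<bar>)"
      by (rule sum.cong[OF refl], rule sum.mono_neutral_right) (use Nbs z in auto)
    also have "\<dots> \<le> (\<Sum>k\<in>Nb. \<Sum>l\<in>Nb. Gm * E2\<^sup>2)"
      by (intro sum_mono b) (use Nbs in auto)
    also have "\<dots> = real (card Nb) * real (card Nb) * (Gm * E2\<^sup>2)" by simp
    also have "\<dots> \<le> 6 * 6 * (Gm * E2\<^sup>2)"
    proof -
      have g0: "0 \<le> Gm" using Gm[of 0 0] by linarith
      have "real (card Nb) * real (card Nb) \<le> 6 * 6" using cNb by (intro mult_mono) auto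
      then show ?thesis using g0 by (intro mult_right_mono) auto
    qed
    finally show ?thesis by (simp add: mult_ac)
  qed
  have "expectation (\<lambda>\<omega>. \<Sum>i<n. \<Sum>j<n. \<Sum>k<n. \<Sum>l<n. T i j k l \<omega>) \<le>
      (\<Sum>i<n. \<Sum>j<n. \<bar>G i j\<bar> * (\<Sum>k<n. \<Sum>l<n. \<bar>G k l\<bar> * \<bar>expectation (qd i j k l)\<bar>))"
    unfolding Ebig
  proof (intro sum_mono)
    fix i j
    have "(\<Sum>k<n. \<Sum>l<n. G i j * G k l * expectation (qd i j k l)) \<le> \<bar>\<Sum>k<n. \<Sum>l<n. G i j * G k l * expectation (qd i j k l)\<bar>"
      by simp
    also have "\<dots> \<le> (\<Sum>k<n. \<bar>\<Sum>l<n. G i j * G k l * expectation (qd i j k l)\<bar>)" by (rule sum_abs)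
    also have "\<dots> \<le> (\<Sum>k<n. \<Sum>l<n. \<bar>G i j * G k l * expectation (qd i j k l)\<bar>)" by (intro sum_mono sum_abs)
    also have "\<dots> = \<bar>G i j\<bar> * (\<Sum>k<n. \<Sum>l<n. \<bar>G k l\<bar> * \<bar>expectation (qd i j k l)\<bar>)"
      by (simp add: abs_mult sum_distrib_left mult_ac)
    finally show "(\<Sum>k<n. \<Sum>l<n. G i j * G k l * expectation (qd i j k l)) \<le> \<bar>G i j\<bar> * (\<Sum>k<n. \<Sum>l<n. \<bar>G k l\<bar> * \<bar>expectation (qd i j k l)\<bar>)" .
  qed
  also have "\<dots> \<le> (\<Sum>i<n. \<Sum>j<n. \<bar>G i j\<bar> * (36 * E2\<^sup>2 * Gm))"
  proof (intro sum_mono)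
    fix i j assume i: "i \<in> {..<n}" and j: "j \<in> {..<n}"
    show "\<bar>G i j\<bar> * (\<Sum>k<n. \<Sum>l<n. \<bar>G k l\<bar> * \<bar>expectation (qd i j k l)\<bar>) \<le> \<bar>G i j\<bar> * (36 * E2\<^sup>2 * Gm)"
    proof (cases "2 \<le> \<bar>int i - int j\<bar>")
      case True then show ?thesis using inner[of i j] i j by (intro mult_left_mono) auto
    next
      case False then show ?thesis using G0 by simp
    qed
  qed
  also have "\<dots> = 36 * E2\<^sup>2 * Gm * (\<Sum>i<n. \<Sum>j<n. \<bar>G i j\<bar>)"
    by (simp add: sum_distrib_left sum_distrib_right mult_ac)
  finally show ?thesis unfolding sqe using Ibig by simp
qed

lemma L_bound:
  fixes c :: "nat \<Rightarrow> real"
  shows "integrable P (\<lambda>\<omega>. (\<Sum>i<n. c i * eps i \<omega>)\<^sup>2) \<and>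
    expectation (\<lambda>\<omega>. (\<Sum>i<n. c i * eps i \<omega>)\<^sup>2) \<le> 3 * E2 * (\<Sum>i<n. (c i)\<^sup>2)"
proof -
  define T where "T i k \<omega> = c i * c k * (eps i \<omega> * eps k \<omega>)" for i k \<omega>
  have sqe: "(\<Sum>i<n. c i * eps i \<omega>)\<^sup>2 = (\<Sum>i<n. \<Sum>k<n. T i k \<omega>)" for \<omega>
    unfolding T_def power2_eq_square sum_distrib_left sum_distrib_right by (simp add: mult_ac)
  have Tint: "integrable P (T i k)" if "i < n" "k < n" for i k
    unfolding T_def using eps_pair[OF that] by auto
  have Ibig: "integrable P (\<lambda>\<omega>. \<Sum>i<n. \<Sum>k<n. T i k \<omega>)" by (intro Bochner_Integration.integrable_sum) (auto intro: Tint)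
  have "expectation (\<lambda>\<omega>. \<Sum>i<n. \<Sum>k<n. T i k \<omega>) = (\<Sum>i<n. \<Sum>k<n. expectation (T i k))"
    using int_sum2[of "{..<n}" "{..<n}" T] Tint by auto
  also have "\<dots> \<le> (\<Sum>i<n. \<Sum>k<n. (if \<bar>int k - int i\<bar> < 2 then E2 * ((c i)\<^sup>2 + (c k)\<^sup>2) / 2 else 0))"
  proof (intro sum_mono)
    fix i k assume i: "i \<in> {..<n}" and k: "k \<in> {..<n}"
    have ET: "expectation (T i k) = c i * c k * expectation (\<lambda>\<omega>. eps i \<omega> * eps k \<omega>)" unfolding T_def by simp
    show "expectation (T i k) \<le> (if \<bar>int k - int i\<bar> < 2 then E2 * ((c i)\<^sup>2 + (c k)\<^sup>2) / 2 else 0)"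
    proof (cases "\<bar>int k - int i\<bar> < 2")
      case False
      then have "2 \<le> \<bar>int i - int k\<bar>" by linarith
      then show ?thesis using eps_pair_zero i k False ET by simp
    next
      case True
      have "expectation (T i k) \<le> \<bar>c i * c k\<bar> * \<bar>expectation (\<lambda>\<omega>. eps i \<omega> * eps k \<omega>)\<bar>"
        unfolding ET by (metis abs_ge_self abs_mult)
      also have "\<dots> \<le> ((c i)\<^sup>2 + (c k)\<^sup>2) / 2 * E2"
        using abs_prod_le[of "c i" "c k"] eps_pair i k by (intro mult_mono) auto
      finally show ?thesis using True by (simp add: mult_ac)
    qed
  qed
  also have "\<dots> = (E2 / 2) * ((\<Sum>i<n. \<Sum>k<n. (if \<bar>int k - int i\<bar> < 2 then (c i)\<^sup>2 else 0)) +
       (\<Sum>i<n. \<Sum>k<n. (if \<bar>int k - int i\<bar> < 2 then (c k)\<^sup>2 else 0)))"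
  proof -
    have "(\<Sum>i<n. \<Sum>k<n. (if \<bar>int k - int i\<bar> < 2 then E2 * ((c i)\<^sup>2 + (c k)\<^sup>2) / 2 else 0)) =
      (\<Sum>i<n. \<Sum>k<n. E2 / 2 * ((if \<bar>int k - int i\<bar> < 2 then (c i)\<^sup>2 else 0) + (if \<bar>int k - int i\<bar> < 2 then (c k)\<^sup>2 else 0)))"
      by (intro sum.cong refl) (auto simp: field_simps)
    also have "\<dots> = (E2 / 2) * ((\<Sum>i<n. \<Sum>k<n. (if \<bar>int k - int i\<bar> < 2 then (c i)\<^sup>2 else 0)) +
       (\<Sum>i<n. \<Sum>k<n. (if \<bar>int k - int i\<bar> < 2 then (c k)\<^sup>2 else 0)))"
      by (simp only: sum_distrib_left sum.distrib distrib_left)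
    finally show ?thesis .
  qed
  also have "(\<Sum>i<n. \<Sum>k<n. (if \<bar>int k - int i\<bar> < 2 then (c k)\<^sup>2 else 0)) =
      (\<Sum>i<n. \<Sum>k<n. (if \<bar>int k - int i\<bar> < 2 then (c i)\<^sup>2 else 0))"
    by (subst sum.swap) (simp add: abs_minus_commute)
  also have "(\<Sum>i<n. \<Sum>k<n. (if \<bar>int k - int i\<bar> < 2 then (c i)\<^sup>2 else 0)) \<le> (\<Sum>i<n. 3 * (c i)\<^sup>2)"
  proof (intro sum_mono)
    fix i
    have "(\<Sum>k<n. (if \<bar>int k - int i\<bar> < 2 then (c i)\<^sup>2 else 0)) = real (card {k. k < n \<and> \<bar>int k - int i\<bar> < 2}) * (c i)\<^sup>2"
      by (simp add: sum.If_cases Int_def)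
    also have "\<dots> \<le> 3 * (c i)\<^sup>2" using card_near[of n i] by (intro mult_right_mono) auto
    finally show "(\<Sum>k<n. (if \<bar>int k - int i\<bar> < 2 then (c i)\<^sup>2 else 0)) \<le> 3 * (c i)\<^sup>2" .
  qed
  finally have "expectation (\<lambda>\<omega>. \<Sum>i<n. \<Sum>k<n. T i k \<omega>) \<le> E2 / 2 * ((\<Sum>i<n. 3 * (c i)\<^sup>2) + (\<Sum>i<n. 3 * (c i)\<^sup>2))"
    using E2_nonneg by (smt (z3) mult_left_mono divide_nonneg_nonneg)
  then show ?thesis unfolding sqe using Ibig by (simp add: sum_distrib_left[symmetric])
qed

end


theorem proposition2p2:
  fixes \<alpha> \<beta> M c :: real and K :: "real \<Rightarrow> real"
    and P :: "'a measure" and \<xi> :: "nat \<Rightarrow> 'a \<Rightarrow> real"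
  assumes "\<alpha> > 0" and "0 < \<beta>" and "\<beta> < 1/2" and "M > 0"
    and "is_kernel K" and "c > 0"
    and "prob_space P"
    and "\<And>i. \<xi> i \<in> borel_measurable P"
    and "prob_space.indep_vars P (\<lambda>_. borel) \<xi> UNIV"
    and "\<And>i. distr P borel (\<xi> i) = distr P borel (\<xi> 0)"
    and "integrable P (\<xi> 0)" and "prob_space.expectation P (\<xi> 0) = 0"
    and "integrable P (\<lambda>\<omega>. (\<xi> 0 \<omega>)\<^sup>2)" and "prob_space.expectation P (\<lambda>\<omega>. (\<xi> 0 \<omega>)\<^sup>2) = 1"
    and "integrable P (\<lambda>\<omega>. (\<xi> 0 \<omega>) ^ 4)"
  shows "\<exists>C. \<forall>(n::nat) (h::real) f V.
     n \<ge> 1 \<longrightarrow> 0 < h \<longrightarrow> h < 1 \<longrightarrow>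
     f \<in> holder_class \<alpha> M \<longrightarrow> V \<in> holder_class \<beta> M \<longrightarrow>
     (\<forall>x\<in>{0..1}. V x \<ge> 0) \<longrightarrow>
     \<bar>kden K n h\<bar> \<ge> c \<longrightarrow>
     (\<integral>\<^sup>+ \<omega>. ennreal ((That K n h f V \<xi> \<omega> - Ttarget n f V)\<^sup>2) \<partial>P)
       \<le> ennreal (C * (real n powr (- 8 * min \<alpha> 1) + h powr (4 * \<beta>) + h\<^sup>2
                 + 1 / ((real n)\<^sup>2 * h) + Wdev2 n V / (real n)\<^sup>2))"
proof -
  note A = assms
  obtain B where B: "B > 0" "\<And>x. \<bar>K x\<bar> \<le> B"
    using kern_props[OF A(5)] by metis
  have NS: "noise P \<xi>"
    unfolding noise_def noise_axioms_def using A(7-15) by auto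
  interpret N: noise P \<xi> by (rule NS)
  define \<kappa> where "\<kappa> = B / c"
  define E2c where "E2c = 54 * (M ^ 4 + 2 * M\<^sup>2 * N.mu4) + 2 * (2 * M + M\<^sup>2)\<^sup>2"
  show ?thesis
  proof (rule exI[of _ "Cf M \<kappa> E2c"], intro allI impI)
    fix n :: nat and h :: real and f V :: "real \<Rightarrow> real"
    assume n1: "n \<ge> 1" and h0: "0 < h" and h1: "h < 1" and fH: "f \<in> holder_class \<alpha> M"
      and VH: "V \<in> holder_class \<beta> M" and V0: "\<forall>x\<in>{0..1}. V x \<ge> 0" and kd: "\<bar>kden K n h\<bar> \<ge> c"
    have npos: "real n > 0" using n1 by simp
    have hl: "h > 2 / real n" by (rule h_large[OF A(5) h0 n1 A(6) kd])
    have nh: "real n * h > 2" using hl npos by (simp add: field_simps)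
    define a where "a = min \<alpha> 1"
    have a0: "a > 0" unfolding a_def using A(1) by simp
    have hf: "\<forall>x\<in>{0..1}. \<forall>y\<in>{0..1}. \<bar>f x - f y\<bar> \<le> M * \<bar>x - y\<bar> powr a"
      unfolding a_def by (rule holder_f[OF fH A(1) A(4)])
    have b1: "\<beta> < 1" using A(3) by simp
    have VM: "\<forall>x\<in>{0..1}. \<bar>V x\<bar> \<le> M" by (rule holder_small(1)[OF VH A(2) b1])
    have VHo: "\<forall>x\<in>{0..1}. \<forall>y\<in>{0..1}. \<bar>V x - V y\<bar> \<le> M * \<bar>x - y\<bar> powr \<beta>"
      by (rule holder_small(2)[OF VH A(2) b1])
    have pt: "real q / real n \<in> {0..1}" if "q \<le> n" for q
      using that npos by (auto simp: field_simps)
    have del_b: "\<bar>deltav n f i\<bar> \<le> M * real n powr (- a)" if "i < n" for i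
    proof -
      have "\<bar>deltav n f i\<bar> \<le> M * \<bar>real (Suc i) / real n - real i / real n\<bar> powr a"
        unfolding deltav_def using hf pt[of "Suc i"] pt[of i] that by auto
      also have "\<bar>real (Suc i) / real n - real i / real n\<bar> = 1 / real n"
        using npos by (simp add: field_simps)
      also have "(1 / real n) powr a = real n powr (- a)"
        using npos by (simp add: powr_minus_divide powr_divide)
      finally show ?thesis .
    qed
    have npa: "real n powr (- a) \<le> 1"
    proof -
      have "real n powr (- a) \<le> real n powr 0" by (rule powr_mono) (use a0 n1 in auto)
      then show ?thesis using npos by simp
    qed
    have del_M: "\<bar>deltav n f i\<bar> \<le> M" if "i < n" for i
      using del_b[OF that] npa A(4) by (meson mult_left_le order_trans less_imp_le)
    define Dn where "Dn = M\<^sup>2 * real n powr (-2 * a)"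
    have del_sq: "(deltav n f i)\<^sup>2 \<le> Dn" if "i < n" for i
    proof -
      have "(deltav n f i)\<^sup>2 \<le> (M * real n powr (- a))\<^sup>2"
        using del_b[OF that] abs_le_square_iff[of "deltav n f i" "M * real n powr (- a)"] A(4) by simp
      also have "\<dots> = Dn" unfolding Dn_def using npos
        by (simp add: power_mult_distrib powr_power)
      finally show ?thesis .
    qed
    define NN where "NN = nat \<lfloor>real n * h\<rfloor>"
    define W where "W i = (if i < n then Wv n V i else 0)" for i
    define d where "d i = (if i < n then (deltav n f i)\<^sup>2 else 0)" for i
    have NNle: "real NN \<le> real n * h" unfolding NN_def using nh by linarith
    have Vpt: "0 \<le> V (real q / real n) \<and> V (real q / real n) \<le> M" if "q \<le> n" for q
      using V0 VM pt[OF that] by auto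
    have WHold: "\<bar>W i - W j\<bar> \<le> 2 * M * (\<bar>real i - real j\<bar> / real n) powr \<beta>" if "i < n" "j < n" for i j
    proof -
      have e1: "\<bar>real i / real n - real j / real n\<bar> = \<bar>real i - real j\<bar> / real n"
        using npos by (simp add: diff_divide_distrib[symmetric] abs_div)
      have e2: "\<bar>real (Suc i) / real n - real (Suc j) / real n\<bar> = \<bar>real i - real j\<bar> / real n"
        using npos by (simp add: diff_divide_distrib[symmetric] abs_div)
      have 1: "\<bar>V (real i / real n) - V (real j / real n)\<bar> \<le> M * (\<bar>real i - real j\<bar> / real n) powr \<beta>"
        using VHo pt[of i] pt[of j] that e1 by fastforce
      have 2: "\<bar>V (real (Suc i) / real n) - V (real (Suc j) / real n)\<bar> \<le> M * (\<bar>real i - real j\<bar> / real n) powr \<beta>"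
        using VHo pt[of "Suc i"] pt[of "Suc j"] that e2 by fastforce
      show ?thesis unfolding W_def Wv_def using that 1 2 by simp
    qed
    have DI: "detc n h M \<beta> Dn \<kappa> NN (Knh K n h) W d"
    proof (unfold_locales)
      show "1 \<le> n" by (rule n1)
      show "0 < h" by (rule h0)
      show "h < 1" by (rule h1)
      show "2 < real n * h" by (rule nh)
      show "0 < \<beta>" by (rule A(2))
      show "0 < M" by (rule A(4))
      show "0 \<le> \<kappa>" unfolding \<kappa>_def using B(1) A(6) by simp
      show "real NN \<le> real n * h" by (rule NNle)
      show "\<And>t. Knh K n h (- t) = Knh K n h t" by (rule Knh_sym)
      show "\<And>t. \<bar>t\<bar> < 2 \<Longrightarrow> Knh K n h t = 0" by (rule Knh_small)
      show "\<And>t. int NN < \<bar>t\<bar> \<Longrightarrow> Knh K n h t = 0"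
      proof -
        fix t :: int assume "int NN < \<bar>t\<bar>"
        then have "real_of_int \<bar>t\<bar> > real n * h" unfolding NN_def using nh by linarith
        then show "Knh K n h t = 0" by (rule Knh_supp[OF A(5) h0 n1])
      qed
      show "\<And>t. \<bar>Knh K n h t\<bar> \<le> \<kappa> / (real n * h)"
        using Knh_bound[OF A(5) h0 n1 A(6) kd B(2)] unfolding \<kappa>_def by (simp add: field_simps)
      show "\<And>i. NN \<le> i \<Longrightarrow> i + NN < n \<Longrightarrow> (\<Sum>j<n. Knh K n h (int i - int j)) = 1"
        by (rule Knh_interior[OF A(5) h0 n1 A(6) kd NN_def])
      show "\<And>i. 0 \<le> W i"
      proof -
        fix i show "0 \<le> W i" unfolding W_def Wv_def using Vpt[of i] Vpt[of "Suc i"] by auto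
      qed
      show "\<And>i. W i \<le> 2 * M"
      proof -
        fix i show "W i \<le> 2 * M" unfolding W_def Wv_def using Vpt[of i] Vpt[of "Suc i"] A(4) by auto
      qed
      show "\<And>i j. i < n \<Longrightarrow> j < n \<Longrightarrow> \<bar>W i - W j\<bar> \<le> 2 * M * (\<bar>real i - real j\<bar> / real n) powr \<beta>"
        by (rule WHold)
      show "\<And>i. 0 \<le> d i" unfolding d_def by simp
      show "\<And>i. d i \<le> Dn" unfolding d_def using del_sq Dn_def by (simp add: less_imp_le)
    qed
    interpret D: detc n h M \<beta> Dn \<kappa> NN "Knh K n h" W d by (rule DI)
    define sv where "sv q = sqrt (V (real q / real n))" for q
    have MI: "model P \<xi> n (deltav n f) sv M"
    proof (rule model.intro[OF NS], unfold_locales)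
      show "0 < M" by (rule A(4))
      show "\<And>i. i < n \<Longrightarrow> \<bar>deltav n f i\<bar> \<le> M" by (rule del_M)
      show "\<And>q. q \<le> n \<Longrightarrow> 0 \<le> sv q"
      proof -
        fix q :: nat assume "q \<le> n"
        then show "0 \<le> sv q" unfolding sv_def using Vpt[of q] by simp
      qed
      show "\<And>q. q \<le> n \<Longrightarrow> (sv q)\<^sup>2 \<le> M"
      proof -
        fix q :: nat assume "q \<le> n"
        then show "(sv q)\<^sup>2 \<le> M" unfolding sv_def using Vpt[of q] by simp
      qed
    qed
    interpret Mo: model P \<xi> n "deltav n f" sv M by (rule MI)
    have R_eq: "diffR n f V \<xi> i \<omega> = Mo.rr i \<omega>" for i \<omega>
      unfolding diffR_def obsY_def Mo.rr_def deltav_def sv_def by simp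
    have m_eq: "Mo.mm i = D.m i" if "i < n" for i
    proof -
      have "(sv (Suc i))\<^sup>2 = V (real (Suc i) / real n)" unfolding sv_def using Vpt[of "Suc i"] that by simp
      moreover have "(sv i)\<^sup>2 = V (real i / real n)" unfolding sv_def using Vpt[of i] that by simp
      ultimately show ?thesis unfolding Mo.mm_def D.m_def W_def d_def Wv_def using that by simp
    qed
    have a_eq: "(diffR n f V \<xi> i \<omega>)\<^sup>2 = D.m i + Mo.eps i \<omega>" if "i < n" for i \<omega>
      unfolding R_eq Mo.eps_alt m_eq[OF that, symmetric] by simp
    have That_eq: "That K n h f V \<xi> \<omega> = (\<Sum>i<n. \<Sum>j<n. D.g i j * ((diffR n f V \<xi> i \<omega>)\<^sup>2 * (diffR n f V \<xi> j \<omega>)\<^sup>2))" for \<omega>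
    proof -
      define Aa where "Aa i = (diffR n f V \<xi> i \<omega>)\<^sup>2" for i
      have pw: "D.g i j * (Aa i * Aa j) = (1 / real n) * (if 2 \<le> \<bar>int i - int j\<bar> then Knh K n h (int i - int j) * Aa i * Aa j else 0)
          - (1 / (real n)\<^sup>2) * (if 2 \<le> \<bar>int i - int j\<bar> then Aa i * Aa j else 0)" for i j
        unfolding D.g_def by (simp add: algebra_simps)
      have "(\<Sum>i<n. \<Sum>j<n. D.g i j * (Aa i * Aa j)) =
        (1 / real n) * (\<Sum>i<n. \<Sum>j<n. if 2 \<le> \<bar>int i - int j\<bar> then Knh K n h (int i - int j) * Aa i * Aa j else 0)
        - (1 / (real n)\<^sup>2) * (\<Sum>i<n. \<Sum>j<n. if 2 \<le> \<bar>int i - int j\<bar> then Aa i * Aa j else 0)"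
        unfolding pw by (simp only: sum_subtractf sum_distrib_left)
      then show ?thesis unfolding That_def Aa_def by simp
    qed
    define Q where "Q \<omega> = (\<Sum>i<n. \<Sum>j<n. D.g i j * (Mo.eps i \<omega> * Mo.eps j \<omega>))" for \<omega>
    define L where "L \<omega> = (\<Sum>i<n. D.cc i * Mo.eps i \<omega>)" for \<omega>
    have decomp: "That K n h f V \<xi> \<omega> = D.Dd + L \<omega> + Q \<omega>" for \<omega>
    proof -
      let ?e = "\<lambda>i. Mo.eps i \<omega>"
      have "That K n h f V \<xi> \<omega> = (\<Sum>i<n. \<Sum>j<n. D.g i j * ((D.m i + ?e i) * (D.m j + ?e j)))"
        unfolding That_eq by (intro sum.cong refl) (simp add: a_eq)
      also have "\<dots> = (\<Sum>i<n. \<Sum>j<n. D.g i j * D.m i * D.m j) + ((\<Sum>i<n. \<Sum>j<n. D.g i j * D.m i * ?e j)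
          + (\<Sum>i<n. \<Sum>j<n. D.g i j * ?e i * D.m j)) + (\<Sum>i<n. \<Sum>j<n. D.g i j * (?e i * ?e j))"
        by (simp add: sum.distrib algebra_simps)
      also have "(\<Sum>i<n. \<Sum>j<n. D.g i j * D.m i * ?e j) = (\<Sum>i<n. \<Sum>j<n. D.g i j * ?e i * D.m j)"
      proof -
        have "(\<Sum>i<n. \<Sum>j<n. D.g i j * D.m i * ?e j) = (\<Sum>j<n. \<Sum>i<n. D.g i j * D.m i * ?e j)"
          by (rule sum.swap)
        also have "\<dots> = (\<Sum>i<n. \<Sum>j<n. D.g i j * ?e i * D.m j)"
          using D.g_sym by (simp add: mult_ac)
        finally show ?thesis .
      qed
      also have "(\<Sum>i<n. \<Sum>j<n. D.g i j * ?e i * D.m j) + (\<Sum>i<n. \<Sum>j<n. D.g i j * ?e i * D.m j) = L \<omega>"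
        unfolding L_def D.cc_def by (simp add: sum_distrib_left sum_distrib_right sum.distrib[symmetric] algebra_simps)
      finally show ?thesis unfolding Q_def D.Dd_def by simp
    qed
    have Tt_eq: "Ttarget n f V = D.Tt"
    proof -
      have sm: "(\<Sum>i<n. D.m i) = (\<Sum>i<n. Wv n V i + (deltav n f i)\<^sup>2)"
        by (intro sum.cong refl) (simp add: D.m_def W_def d_def)
      have mb: "D.mb = Wbar n V + delta2bar n f"
        unfolding D.mb_def sm Wbar_def delta2bar_def by (simp add: sum.distrib algebra_simps)
      show ?thesis unfolding Ttarget_def D.Tt_def mb
        by (intro arg_cong[where f="\<lambda>x. (1 / real n) * x"] sum.cong refl) (simp add: D.m_def W_def d_def diff_diff_eq)
    qed
    have Wd_eq: "Wdev2 n V = D.Wdev"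
    proof -
      have wb: "D.Wb = Wbar n V" unfolding D.Wb_def W_def Wbar_def by simp
      show ?thesis unfolding Wdev2_def D.Wdev_def wb by (intro sum.cong refl) (simp add: W_def)
    qed
    define Gm where "Gm = (\<kappa> + 1) / ((real n)\<^sup>2 * h)"
    have QB: "integrable P (\<lambda>\<omega>. (Q \<omega>)\<^sup>2) \<and> N.expectation (\<lambda>\<omega>. (Q \<omega>)\<^sup>2) \<le> 36 * Mo.E2\<^sup>2 * Gm * (\<Sum>i<n. \<Sum>j<n. \<bar>D.g i j\<bar>)"
      unfolding Q_def Gm_def
      by (rule Mo.Q_bound) (simp add: D.g_def, rule D.g_abs)
    have LB: "integrable P (\<lambda>\<omega>. (L \<omega>)\<^sup>2) \<and> N.expectation (\<lambda>\<omega>. (L \<omega>)\<^sup>2) \<le> 3 * Mo.E2 * (\<Sum>i<n. (D.cc i)\<^sup>2)"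
      unfolding L_def by (rule Mo.L_bound)
    have E2eq: "Mo.E2 = E2c" unfolding Mo.E2_def E2c_def by simp
    have E0: "E2c \<ge> 0" using Mo.E2_nonneg E2eq by simp
    have Qb2: "N.expectation (\<lambda>\<omega>. (Q \<omega>)\<^sup>2) \<le> 36 * E2c\<^sup>2 * ((\<kappa> + 1) / ((real n)\<^sup>2 * h)) * (3 * \<kappa> + 1)"
    proof -
      have "0 \<le> 36 * E2c\<^sup>2 * Gm" unfolding Gm_def using D.\<kappa>0 h0 by simp
      then have "36 * E2c\<^sup>2 * Gm * (\<Sum>i<n. \<Sum>j<n. \<bar>D.g i j\<bar>) \<le> 36 * E2c\<^sup>2 * Gm * (3 * \<kappa> + 1)"
        by (rule mult_left_mono[OF D.g_sum])
      then show ?thesis using QB unfolding E2eq Gm_def by linarith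
    qed
    have Tb: "3 * N.expectation (\<lambda>\<omega>. (Q \<omega>)\<^sup>2) + 3 * (3 * E2c * (\<Sum>i<n. (D.cc i)\<^sup>2)) + 3 * (D.Dd - D.Tt)\<^sup>2
        \<le> Cf M \<kappa> E2c * D.P0 a"
      by (rule D.total_bound[OF a0 Dn_def E0 Qb2 D.cc_sq_sum D.DdTt_bound])
    have pw: "(That K n h f V \<xi> \<omega> - Ttarget n f V)\<^sup>2 \<le> 3 * (Q \<omega>)\<^sup>2 + 3 * (L \<omega>)\<^sup>2 + 3 * (D.Dd - D.Tt)\<^sup>2" for \<omega>
    proof -
      have "That K n h f V \<xi> \<omega> - Ttarget n f V = (D.Dd - D.Tt) + L \<omega> + Q \<omega>"
        unfolding decomp Tt_eq by simp
      then show ?thesis using sq3[of "D.Dd - D.Tt" "L \<omega>" "Q \<omega>"] by simp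
    qed
    have Iall: "integrable P (\<lambda>\<omega>. 3 * (Q \<omega>)\<^sup>2 + 3 * (L \<omega>)\<^sup>2 + 3 * (D.Dd - D.Tt)\<^sup>2)"
      using QB LB by auto
    have Eall: "N.expectation (\<lambda>\<omega>. 3 * (Q \<omega>)\<^sup>2 + 3 * (L \<omega>)\<^sup>2 + 3 * (D.Dd - D.Tt)\<^sup>2)
       = 3 * N.expectation (\<lambda>\<omega>. (Q \<omega>)\<^sup>2) + 3 * N.expectation (\<lambda>\<omega>. (L \<omega>)\<^sup>2) + 3 * (D.Dd - D.Tt)\<^sup>2"
      using QB LB N.prob_space by simp
    have "(\<integral>\<^sup>+ \<omega>. ennreal ((That K n h f V \<xi> \<omega> - Ttarget n f V)\<^sup>2) \<partial>P)
        \<le> (\<integral>\<^sup>+ \<omega>. ennreal (3 * (Q \<omega>)\<^sup>2 + 3 * (L \<omega>)\<^sup>2 + 3 * (D.Dd - D.Tt)\<^sup>2) \<partial>P)"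
      by (rule nn_integral_mono) (rule ennreal_leI[OF pw])
    also have "\<dots> = ennreal (N.expectation (\<lambda>\<omega>. 3 * (Q \<omega>)\<^sup>2 + 3 * (L \<omega>)\<^sup>2 + 3 * (D.Dd - D.Tt)\<^sup>2))"
      by (rule nn_integral_eq_integral[OF Iall]) simp
    also have "\<dots> \<le> ennreal (Cf M \<kappa> E2c * D.P0 a)"
    proof (rule ennreal_leI)
      have "3 * N.expectation (\<lambda>\<omega>. (L \<omega>)\<^sup>2) \<le> 3 * (3 * E2c * (\<Sum>i<n. (D.cc i)\<^sup>2))"
        using LB E2eq by simp
      then show "N.expectation (\<lambda>\<omega>. 3 * (Q \<omega>)\<^sup>2 + 3 * (L \<omega>)\<^sup>2 + 3 * (D.Dd - D.Tt)\<^sup>2) \<le> Cf M \<kappa> E2c * D.P0 a"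
        unfolding Eall using Tb by linarith
    qed
    also have "D.P0 a = real n powr (- 8 * min \<alpha> 1) + h powr (4 * \<beta>) + h\<^sup>2
                 + 1 / ((real n)\<^sup>2 * h) + Wdev2 n V / (real n)\<^sup>2"
      unfolding D.P0_def a_def Wd_eq by simp
    finally show "(\<integral>\<^sup>+ \<omega>. ennreal ((That K n h f V \<xi> \<omega> - Ttarget n f V)\<^sup>2) \<partial>P)
       \<le> ennreal (Cf M \<kappa> E2c * (real n powr (- 8 * min \<alpha> 1) + h powr (4 * \<beta>) + h\<^sup>2
                 + 1 / ((real n)\<^sup>2 * h) + Wdev2 n V / (real n)\<^sup>2))" .
  qed
qed


end
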